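(* Let $a,c\in\mathbb{C}$ satisfy $2c\notin\{0,-1,-2,\dots\}$, $2a\notin\{1,2,3,\dots\}$ and $\operatorname{Re}(c-a)>\tfrac12$. Let $w$ be a complex number with $|w|=1$ and $w\neq\pm1$, and put $z=w^2$. Then $$ {}_2H_2\!\left[\begin{matrix} a,\ a+\tfrac12\\ c,\ c+\tfrac12\end{matrix};\ z\right] =\frac{\Gamma(2c)\,\Gamma(1-2a)}{2\,\Gamma(2c-2a)}\left(\frac{(1+w)^{2c-2a-1}}{w^{2c-1}}+\frac{(1-w)^{2c-2a-1}}{(-w)^{2c-1}}\right), $$ where all powers are principal branches as described in the context. In particular the right-hand side is unchanged if $w$ is replaced by $-w$.
   Context: For $x\in\mathbb{C}$ and integers $m$, the Pochhammer symbol is $(x)_0=1$, $(x)_m=x(x+1)\cdots(x+m-1)$ for $m\ge1$, and $(x)_{-m}=\dfrac{1}{(x-1)(x-2)\cdots(x-m)}$ for $m\ge1$ (equivalently $(x)_m=\Gamma(x+m)/\Gamma(x)$). The bilateral hypergeometric series is $$ {}_2H_2\!\left[\begin{matrix} a_1,a_2\\ b_1,b_2\end{matrix};z\right]=\sum_{m=-\infty}^{\infty}\frac{(a_1)_m(a_2)_m}{(b_1)_m(b_2)_m}\,z^m . $$ Under the stated hypotheses all terms are defined and, for $|z|=1$, the series converges absolutely (its terms are $O(|m|^{2\operatorname{Re}(a-c)})$ as $m\to\pm\infty$). Branch conventions: every $u$ with $|u|=1$, $u\neq-1$ is written uniquely as $u=e^{i\psi}$ with $\psi\in(-\pi,\pi)$,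 and for $s\in\mathbb{C}$ one sets $u^{s}:=e^{is\psi}$ and $(1+u)^{s}:=\bigl(2\cos(\psi/2)\bigr)^{s}e^{is\psi/2}$ (with the real positive base raised to the power $s$ in the usual way). This is applied with $u=w$ and with $u=-w$, where $(1-w)^s:=(1+(-w))^s$. *)

theory Defs
  imports "HOL-Analysis.Analysis"
begin

definition poch_int :: "complex \<Rightarrow> int \<Rightarrow> complex" where
  "poch_int x m =
     (if 0 \<le> m then pochhammer x (nat m)
      else 1 / pochhammer (x - of_int (- m)) (nat (- m)))"

definition H22_term :: "complex \<Rightarrow> complex \<Rightarrow> complex \<Rightarrow> complex \<Rightarrow> complex \<Rightarrow> int \<Rightarrow> complex" where
  "H22_term a1 a2 b1 b2 z m =
     poch_int a1 m * poch_int a2 m / (poch_int b1 m * poch_int b2 m) * z powi m"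

text \<open>Branch conventions: for |u| = 1, u \<noteq> -1, u = exp(i psi) with psi = Arg u in (-pi,pi);
  u^s := exp(i s psi) and (1+u)^s := (2 cos(psi/2))^s exp(i s psi/2).\<close>
definition circ_pow :: "complex \<Rightarrow> complex \<Rightarrow> complex" where
  "circ_pow u s = exp (\<i> * s * complex_of_real (Arg u))"

definition onep_pow :: "complex \<Rightarrow> complex \<Rightarrow> complex" where
  "onep_pow u s = complex_of_real (2 * cos (Arg u / 2)) powr s
                    * exp (\<i> * s * complex_of_real (Arg u) / 2)"

definition H22_rhs :: "complex \<Rightarrow> complex \<Rightarrow> complex \<Rightarrow> complex" where
  "H22_rhs a c w =
     Gamma (2*c) * Gamma (1 - 2*a) / (2 * Gamma (2*c - 2*a)) *
     (onep_pow w (2*c - 2*a - 1) / circ_pow w (2*c - 1)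
      + onep_pow (- w) (2*c - 2*a - 1) / circ_pow (- w) (2*c - 1))"

end

theory Submission
  imports Defs
begin

lemma powr_shift_bound:
  fixes k s :: real
  assumes "k \<ge> 1"
  shows "k powr s \<le> 2 powr \<bar>s\<bar> * (k + 1) powr s"
proof (cases "s \<ge> 0")
  case True
  have "k powr s \<le> (k+1) powr s" using assms True by (intro powr_mono2) auto
  moreover have "1 \<le> 2 powr \<bar>s\<bar>" by (simp add: ge_one_powr_ge_zero)
  hence "1 * (k+1) powr s \<le> 2 powr \<bar>s\<bar> * (k + 1) powr s"
    by (intro mult_right_mono) auto
  ultimately show ?thesis by simp
next
  case False
  have kpos: "k > 0" using assms by simp
  have e1: "((k+1)/k) powr (-s) = k powr s / (k+1) powr s"
    using kpos by (simp add: powr_minus powr_divide)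
  have "k powr s = (k+1) powr s * ((k+1)/k) powr (-s)"
    unfolding e1 using kpos by simp
  also have "((k+1)/k) powr (-s) \<le> 2 powr (-s)"
    using kpos assms False by (intro powr_mono2) (auto simp: divide_simps)
  hence "(k+1) powr s * ((k+1)/k) powr (-s) \<le> (k+1) powr s * 2 powr (-s)"
    by (intro mult_left_mono) auto
  finally show ?thesis using False by (simp add: mult.commute)
qed

lemma poch_ratio_bound:
  fixes a c :: complex
  assumes c: "c \<notin> \<int>\<^sub>\<le>\<^sub>0"
  shows "\<exists>M. \<forall>n\<ge>1. norm (pochhammer a n / pochhammer c n) \<le> M * real n powr Re (a - c)"
proof -
  have rc: "rGamma c \<noteq> 0" using c by (simp add: rGamma_eq_zero_iff)
  have "(\<lambda>n. rGamma_series a n / rGamma_series c n) \<longlonglongrightarrow> rGamma a / rGamma c"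
    using rc by (intro tendsto_intros)
  hence "Bseq (\<lambda>n. rGamma_series a n / rGamma_series c n)"
    by (intro convergent_imp_Bseq) (auto simp: convergent_def)
  then obtain B where B: "\<And>n. norm (rGamma_series a n / rGamma_series c n) \<le> B"
    by (metis BseqE)
  have B0: "B \<ge> 0" using B[of 0] norm_ge_zero order_trans by blast
  have pc: "pochhammer c n \<noteq> 0" for n
    using c by (auto simp: pochhammer_eq_0_iff)
  have key: "norm (pochhammer a (Suc k) / pochhammer c (Suc k)) \<le> B * real k powr Re (a - c)"
    if k: "k \<ge> 1" for k
  proof -
    define L where "L = complex_of_real (ln (real k))"
    define P where "P = pochhammer a (Suc k)"
    define Q where "Q = pochhammer c (Suc k)"
    have Q0: "Q \<noteq> 0" using pc unfolding Q_def by blast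
    have f0: "(fact k :: complex) \<noteq> 0" by simp
    have "rGamma_series a k / rGamma_series c k = (P / (fact k * exp (a * L))) / (Q / (fact k * exp (c * L)))"
      unfolding rGamma_series_def P_def Q_def L_def by simp
    also have "\<dots> = (P / Q) * (exp (c * L) / exp (a * L))"
      using Q0 f0 by (simp add: field_simps)
    also have "exp (c * L) / exp (a * L) = exp (- ((a - c) * L))"
      by (simp add: exp_diff[symmetric] algebra_simps)
    finally have X: "rGamma_series a k / rGamma_series c k = (P / Q) * exp (- ((a - c) * L))" .
    have "exp (- ((a - c) * L)) * exp ((a - c) * L) = 1" by (simp add: exp_minus)
    hence eq: "P / Q = (rGamma_series a k / rGamma_series c k) * exp ((a - c) * L)"
      unfolding X by (simp add: mult.assoc)
    have nE: "norm (exp ((a - c) * L)) = real k powr Re (a - c)"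
      using k by (simp add: L_def norm_exp_eq_Re powr_def)
    have "norm (P / Q) = norm (rGamma_series a k / rGamma_series c k) * real k powr Re (a - c)"
      unfolding eq norm_mult nE ..
    also have "\<dots> \<le> B * real k powr Re (a - c)"
      using B[of k] by (intro mult_right_mono) auto
    finally show ?thesis unfolding P_def Q_def .
  qed
  define s where "s = Re (a - c)"
  define M where "M = max (norm (a / c)) (B * 2 powr \<bar>s\<bar>)"
  have "norm (pochhammer a n / pochhammer c n) \<le> M * real n powr s" if n: "n \<ge> 1" for n
  proof (cases "n = 1")
    case True
    thus ?thesis by (simp add: M_def)
  next
    case False
    then obtain k where nk: "n = Suc k" and k: "k \<ge> 1" using n by (cases n) auto
    have "norm (pochhammer a n / pochhammer c n) \<le> B * real k powr s"
      using key[OF k] by (simp add: nk s_def)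
    also have "\<dots> \<le> B * (2 powr \<bar>s\<bar> * (real k + 1) powr s)"
      using k B0 by (intro mult_left_mono powr_shift_bound) auto
    also have "\<dots> = (B * 2 powr \<bar>s\<bar>) * real n powr s"
      by (simp add: nk add.commute)
    also have "\<dots> \<le> M * real n powr s"
      by (intro mult_right_mono) (auto simp: M_def)
    finally show ?thesis .
  qed
  thus ?thesis unfolding s_def by blast
qed

definition gterm :: "complex \<Rightarrow> complex \<Rightarrow> complex \<Rightarrow> nat \<Rightarrow> complex" where
  "gterm a b c n = pochhammer a n * pochhammer b n / (pochhammer c n * fact n)"

lemma nonpos_Ints_add_nat:
  fixes c :: complex
  assumes "c \<notin> \<int>\<^sub>\<le>\<^sub>0"
  shows "c + of_nat m \<notin> \<int>\<^sub>\<le>\<^sub>0"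
proof
  assume "c + of_nat m \<in> \<int>\<^sub>\<le>\<^sub>0"
  then obtain k where "c + of_nat m = - of_nat k" by (elim nonpos_Ints_cases')
  hence "c = - of_nat (k + m)" by (simp add: algebra_simps)
  hence "c \<in> \<int>\<^sub>\<le>\<^sub>0" by (simp only: minus_of_nat_in_nonpos_Ints)
  thus False using assms by simp
qed

lemma Re_pos_not_nonpos_Int:
  fixes c :: complex
  assumes "Re c > 0"
  shows "c \<notin> \<int>\<^sub>\<le>\<^sub>0"
  using assms by (auto elim!: nonpos_Ints_cases')

lemma gterm_bound:
  assumes c: "c \<notin> \<int>\<^sub>\<le>\<^sub>0"
  shows "\<exists>M. \<forall>n\<ge>1. norm (gterm a b c n) \<le> M * real n powr (Re (a + b - c) - 1)"
proof -
  obtain M1 where M1: "\<forall>n\<ge>1. norm (pochhammer a n / pochhammer c n) \<le> M1 * real n powr Re (a - c)"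
    using poch_ratio_bound[OF c] by blast
  have one: "(1::complex) \<notin> \<int>\<^sub>\<le>\<^sub>0" by (intro Re_pos_not_nonpos_Int) auto
  obtain M2 where M2: "\<forall>n\<ge>1. norm (pochhammer b n / pochhammer 1 n) \<le> M2 * real n powr Re (b - 1)"
    using poch_ratio_bound[OF one] by blast
  have "norm (pochhammer a 1 / pochhammer c 1) \<le> M1" using M1[rule_format, of 1] by simp
  hence M1p: "M1 \<ge> 0" using norm_ge_zero order_trans by blast
  have "norm (pochhammer b 1 / pochhammer 1 1) \<le> M2" using M2[rule_format, of 1] by simp
  hence M2p: "M2 \<ge> 0" using norm_ge_zero order_trans by blast
  have "norm (gterm a b c n) \<le> (M1 * M2) * real n powr (Re (a + b - c) - 1)" if n: "n \<ge> 1" for n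
  proof -
    have "gterm a b c n = (pochhammer a n / pochhammer c n) * (pochhammer b n / pochhammer 1 n)"
      by (simp add: gterm_def pochhammer_fact)
    hence "norm (gterm a b c n) = norm ((pochhammer a n / pochhammer c n) * (pochhammer b n / pochhammer 1 n))"
      by simp
    also have "\<dots> = norm (pochhammer a n / pochhammer c n) * norm (pochhammer b n / pochhammer 1 n)"
      by (rule norm_mult)
    also have "\<dots> \<le> (M1 * real n powr Re (a - c)) * (M2 * real n powr Re (b - 1))"
      using M1 M2 n M1p M2p by (intro mult_mono) auto
    also have "\<dots> = (M1 * M2) * (real n powr Re (a - c) * real n powr Re (b - 1))"
      by (simp add: algebra_simps)
    also have "real n powr Re (a - c) * real n powr Re (b - 1) = real n powr (Re (a + b - c) - 1)"
      by (simp add: powr_add[symmetric] algebra_simps)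
    finally show ?thesis .
  qed
  thus ?thesis by blast
qed

lemma gterm_summable:
  assumes c: "c \<notin> \<int>\<^sub>\<le>\<^sub>0" and re: "Re (c - a - b) > 0"
  shows "summable (\<lambda>n. norm (gterm a b c n))"
proof -
  obtain M where M: "\<forall>n\<ge>1. norm (gterm a b c n) \<le> M * real n powr (Re (a + b - c) - 1)"
    using gterm_bound[OF c] by blast
  have "summable (\<lambda>n. real n powr (Re (a + b - c) - 1))"
    using re by (subst summable_real_powr_iff) auto
  hence "summable (\<lambda>n. M * real n powr (Re (a + b - c) - 1))" by (rule summable_mult)
  thus ?thesis by (rule summable_comparison_test'[where N=1]) (use M in auto)
qed

lemma gterm_n_tendsto:
  assumes c: "c \<notin> \<int>\<^sub>\<le>\<^sub>0" and re: "Re (c - a - b) > 0"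
  shows "(\<lambda>n. of_nat n * gterm a b c n) \<longlonglongrightarrow> 0"
proof -
  obtain M where M: "\<forall>n\<ge>1. norm (gterm a b c n) \<le> M * real n powr (Re (a + b - c) - 1)"
    using gterm_bound[OF c] by blast
  have ev: "eventually (\<lambda>n. norm (of_nat n * gterm a b c n) \<le> M * real n powr (Re (a + b - c))) sequentially"
    using eventually_ge_at_top[of 1]
  proof eventually_elim
    case (elim n)
    have "norm (of_nat n * gterm a b c n) = real n * norm (gterm a b c n)" by (simp add: norm_mult)
    also have "\<dots> \<le> real n * (M * real n powr (Re (a + b - c) - 1))"
      using M elim by (intro mult_left_mono) auto
    also have "\<dots> = M * (real n powr 1 * real n powr (Re (a + b - c) - 1))"
      using elim by simp
    also have "\<dots> = M * real n powr (1 + (Re (a + b - c) - 1))"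
      by (simp only: powr_add)
    also have "1 + (Re (a + b - c) - 1) = Re (a + b - c)" by simp
    finally show ?case .
  qed
  have "(\<lambda>n. real n powr (Re (a + b - c))) \<longlonglongrightarrow> 0"
    by (rule tendsto_neg_powr[OF _ filterlim_real_sequentially]) (use re in simp)
  hence "(\<lambda>n. M * real n powr (Re (a + b - c))) \<longlonglongrightarrow> 0"
    by (rule tendsto_mult_right_zero)
  thus ?thesis by (rule Lim_null_comparison[OF ev])
qed
lemma contig_alg:
  fixes a b c U n :: complex
  assumes "c + n \<noteq> 0"
  shows "c * (c - a - b) * U - (c - a) * (c - b) * (U * c / (c + n))
       = c * n * U - c * U * (a + n) * (b + n) / (c + n)"
  using assms by (simp add: field_simps)

lemma nonpos_Int_ne:
  fixes c :: complex
  assumes "c \<notin> \<int>\<^sub>\<le>\<^sub>0"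
  shows "c + of_nat n \<noteq> 0"
proof
  assume "c + of_nat n = 0"
  hence "c = - of_nat n" by (simp add: eq_neg_iff_add_eq_0)
  thus False using assms by simp
qed

lemma cancel_helper:
  fixes k u X Y c :: complex
  assumes "k \<noteq> 0"
  shows "c * (k * (u * (X / (Y * k)))) = c * u * X / Y"
  using assms by (simp add: field_simps)

lemma gterm_Suc:
  assumes c: "c \<notin> \<int>\<^sub>\<le>\<^sub>0"
  shows "gterm a b c (Suc n) = gterm a b c n * ((a + of_nat n) * (b + of_nat n) / ((c + of_nat n) * (of_nat n + 1)))"
proof -
  have pc: "pochhammer c n \<noteq> 0" using c by (auto simp: pochhammer_eq_0_iff)
  have cn: "c + of_nat n \<noteq> 0" using nonpos_Int_ne[OF c] .
  have n1: "(of_nat n + 1 :: complex) \<noteq> 0" by (metis of_nat_Suc of_nat_eq_0_iff add.commute nat.distinct(1))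
  show ?thesis using pc cn n1 unfolding gterm_def
    by (simp add: pochhammer_rec' field_simps)
qed

lemma gterm_c1:
  assumes c: "c \<notin> \<int>\<^sub>\<le>\<^sub>0"
  shows "gterm a b (c + 1) n = gterm a b c n * c / (c + of_nat n)"
proof -
  have pc: "pochhammer c n \<noteq> 0" using c by (auto simp: pochhammer_eq_0_iff)
  have cn: "c + of_nat n \<noteq> 0" using nonpos_Int_ne[OF c] .
  have c0: "c \<noteq> 0" using nonpos_Int_ne[OF c, of 0] by simp
  have "c * pochhammer (c + 1) n = (c + of_nat n) * pochhammer c n"
    using pochhammer_rec[of c n] pochhammer_rec'[of c n] by simp
  hence e: "pochhammer (c + 1) n = (c + of_nat n) * pochhammer c n / c"
    using c0 by (simp add: field_simps)
  show ?thesis unfolding gterm_def e using pc cn c0 by (simp add: field_simps)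
qed

lemma contiguity:
  assumes c: "c \<notin> \<int>\<^sub>\<le>\<^sub>0" and re: "Re (c - a - b) > 0"
  shows "c * (c - a - b) * suminf (gterm a b c) = (c - a) * (c - b) * suminf (gterm a b (c + 1))"
proof -
  define u where "u = gterm a b c"
  define v where "v = gterm a b (c + 1)"
  define D where "D n = c * (of_nat n * u n)" for n
  have c1: "c + 1 \<notin> \<int>\<^sub>\<le>\<^sub>0" using nonpos_Ints_add_nat[OF c, of 1] by simp
  have re1: "Re (c + 1 - a - b) > 0" using re by simp
  have su: "summable u" unfolding u_def
    by (rule summable_norm_cancel[OF gterm_summable[OF c re]])
  have sv: "summable v" unfolding v_def
    by (rule summable_norm_cancel[OF gterm_summable[OF c1 re1]])
  have pt: "c * (c - a - b) * u n - (c - a) * (c - b) * v n = D n - D (Suc n)" for n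
  proof -
    have cn: "c + of_nat n \<noteq> 0" using nonpos_Int_ne[OF c] .
    have n1: "(of_nat n + 1 :: complex) \<noteq> 0" by (metis of_nat_Suc of_nat_eq_0_iff add.commute nat.distinct(1))
    have n1': "(1 + of_nat n :: complex) \<noteq> 0" using n1 by (simp add: add.commute)
    have "D (Suc n) = c * ((of_nat n + 1) * u (Suc n))" by (simp add: D_def add.commute)
    also have "u (Suc n) = u n * ((a + of_nat n) * (b + of_nat n) / ((c + of_nat n) * (of_nat n + 1)))"
      unfolding u_def by (rule gterm_Suc[OF c])
    also have "c * ((of_nat n + 1) * (u n * ((a + of_nat n) * (b + of_nat n) / ((c + of_nat n) * (of_nat n + 1)))))
       = c * u n * ((a + of_nat n) * (b + of_nat n)) / (c + of_nat n)"
      by (rule cancel_helper[OF n1])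
    finally have d1: "D (Suc n) = c * u n * (a + of_nat n) * (b + of_nat n) / (c + of_nat n)"
      by (simp add: mult.assoc)
    have v1: "v n = u n * c / (c + of_nat n)" unfolding u_def v_def by (rule gterm_c1[OF c])
    have dn: "D n = c * (of_nat n * u n)" by (simp add: D_def)
    show ?thesis unfolding d1 v1 dn using contig_alg[OF cn, of a b "u n"] by (simp add: mult.assoc)
  qed
  have s1: "(\<lambda>n. c * (c - a - b) * u n - (c - a) * (c - b) * v n) sums
              (c * (c - a - b) * suminf u - (c - a) * (c - b) * suminf v)"
    by (intro sums_diff sums_mult summable_sums su sv)
  have "D \<longlonglongrightarrow> c * 0" unfolding D_def u_def
    by (intro tendsto_mult tendsto_const gterm_n_tendsto[OF c re])
  hence s2: "(\<lambda>n. D n - D (Suc n)) sums (D 0 - c * 0)" by (rule telescope_sums')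
  have "c * (c - a - b) * suminf u - (c - a) * (c - b) * suminf v = D 0 - c * 0"
    using sums_unique2[OF s1[unfolded pt] s2] .
  thus ?thesis by (simp add: D_def u_def v_def)
qed

lemma gauss_iter:
  assumes c: "c \<notin> \<int>\<^sub>\<le>\<^sub>0" and re: "Re (c - a - b) > 0"
  shows "suminf (gterm a b c) * pochhammer c m * pochhammer (c - a - b) m
       = pochhammer (c - a) m * pochhammer (c - b) m * suminf (gterm a b (c + of_nat m))"
proof (induction m)
  case 0
  then show ?case by simp
next
  case (Suc m)
  define c' where "c' = c + of_nat m"
  have c': "c' \<notin> \<int>\<^sub>\<le>\<^sub>0" unfolding c'_def by (rule nonpos_Ints_add_nat[OF c])
  have re': "Re (c' - a - b) > 0" using re by (simp add: c'_def)
  have ct: "c' * (c' - a - b) * suminf (gterm a b c') = (c' - a) * (c' - b) * suminf (gterm a b (c' + 1))"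
    by (rule contiguity[OF c' re'])
  have e1: "c + of_nat (Suc m) = c' + 1" by (simp add: c'_def)
  have "suminf (gterm a b c) * pochhammer c (Suc m) * pochhammer (c - a - b) (Suc m)
      = (suminf (gterm a b c) * pochhammer c m * pochhammer (c - a - b) m) * (c' * (c' - a - b))"
    by (simp add: pochhammer_rec' c'_def algebra_simps)
  also have "\<dots> = pochhammer (c - a) m * pochhammer (c - b) m * (c' * (c' - a - b) * suminf (gterm a b c'))"
    unfolding Suc.IH c'_def by (simp add: algebra_simps)
  also have "\<dots> = pochhammer (c - a) m * pochhammer (c - b) m * ((c' - a) * (c' - b) * suminf (gterm a b (c' + 1)))"
    unfolding ct ..
  also have "\<dots> = pochhammer (c - a) (Suc m) * pochhammer (c - b) (Suc m) * suminf (gterm a b (c + of_nat (Suc m)))"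
    unfolding e1 by (simp add: pochhammer_rec' c'_def algebra_simps)
  finally show ?case .
qed

lemma norm_add_real_ge:
  fixes x :: complex and t :: real
  assumes "Re x \<ge> 0" "t \<ge> 0"
  shows "norm x \<le> norm (x + of_real t)"
proof -
  have "(norm x)^2 \<le> (norm (x + of_real t))^2"
    using assms unfolding cmod_power2 by (simp add: power2_eq_square algebra_simps)
  thus ?thesis by (rule power2_le_imp_le) simp
qed

lemma poch_norm_mono:
  fixes x :: complex and t :: real
  assumes "Re x \<ge> 0" "t \<ge> 0"
  shows "norm (pochhammer x n) \<le> norm (pochhammer (x + of_real t) n)"
proof -
  have "norm (pochhammer x n) = (\<Prod>i\<in>{0..<n}. norm (x + of_nat i))"
    by (simp add: pochhammer_prod prod_norm)
  also have "\<dots> \<le> (\<Prod>i\<in>{0..<n}. norm ((x + of_nat i) + of_real t))"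
    using assms by (intro prod_mono conjI norm_ge_zero norm_add_real_ge) auto
  also have "\<dots> = norm (pochhammer (x + of_real t) n)"
    by (simp add: pochhammer_prod prod_norm algebra_simps)
  finally show ?thesis .
qed

lemma inverse_plus_nat_tendsto:
  fixes c :: complex
  shows "(\<lambda>m. inverse (c + of_nat m)) \<longlonglongrightarrow> 0"
proof -
  have "filterlim (\<lambda>m. norm (of_nat m :: complex)) at_top sequentially"
    using filterlim_real_sequentially by simp
  hence "filterlim (\<lambda>m. of_nat m :: complex) at_infinity sequentially"
    by (simp only: filterlim_at_infinity_conv_norm_at_top)
  hence "filterlim (\<lambda>m. c + of_nat m) at_infinity sequentially"
    by (rule tendsto_add_filterlim_at_infinity[OF tendsto_const])
  thus ?thesis by (rule filterlim_compose[OF tendsto_inverse_0])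
qed

lemma G_limit:
  assumes c: "c \<notin> \<int>\<^sub>\<le>\<^sub>0" and re: "Re (c - a - b) > 0"
  shows "(\<lambda>m. suminf (gterm a b (c + of_nat m))) \<longlonglongrightarrow> 1"
proof -
  define m0 where "m0 = nat (ceiling (- Re c)) + 1"
  define c0 where "c0 = c + of_nat m0"
  have m0: "Re c + real m0 > 0" unfolding m0_def by linarith
  have c0: "c0 \<notin> \<int>\<^sub>\<le>\<^sub>0" unfolding c0_def by (rule nonpos_Ints_add_nat[OF c])
  have re0: "Re (c0 - a - b) > 0" using re by (simp add: c0_def)
  define S where "S = (\<Sum>n. norm (gterm a b c0 (Suc n)))"
  have sS: "summable (\<lambda>n. norm (gterm a b c0 (Suc n)))"
    using gterm_summable[OF c0 re0] by (subst summable_Suc_iff)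
  have bound: "norm (suminf (gterm a b (c + of_nat m)) - 1) \<le> norm c0 * S * norm (inverse (c + of_nat m))"
    if m: "m \<ge> m0" for m
  proof -
    define x where "x = c + of_nat m"
    have x: "x \<notin> \<int>\<^sub>\<le>\<^sub>0" unfolding x_def by (rule nonpos_Ints_add_nat[OF c])
    have rex: "Re (x - a - b) > 0" using re by (simp add: x_def)
    have x0: "x \<noteq> 0" using nonpos_Int_ne[OF x, of 0] by simp
    have c00: "c0 \<noteq> 0" using nonpos_Int_ne[OF c0, of 0] by simp
    have sx: "summable (\<lambda>n. norm (gterm a b x (Suc n)))"
      using gterm_summable[OF x rex] by (subst summable_Suc_iff)
    have tb: "norm (gterm a b x (Suc n)) \<le> (norm c0 * norm (inverse x)) * norm (gterm a b c0 (Suc n))" for n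
    proof -
      have xe: "x + 1 = (c0 + 1) + of_real (real (m - m0))"
        using m by (simp add: x_def c0_def of_nat_diff)
      have "norm (pochhammer (c0 + 1) n) \<le> norm (pochhammer (x + 1) n)"
        unfolding xe using m0 by (intro poch_norm_mono) (auto simp: c0_def)
      moreover have "pochhammer (c0 + 1) n \<noteq> 0"
        using nonpos_Ints_add_nat[OF c0, of 1] by (auto simp: pochhammer_eq_0_iff)
      ultimately have le: "inverse (norm (pochhammer (x + 1) n)) \<le> inverse (norm (pochhammer (c0 + 1) n))"
        by (intro le_imp_inverse_le) auto
      define N where "N = norm (pochhammer a (Suc n) * pochhammer b (Suc n)) / norm (fact (Suc n) :: complex)"
      have N0: "N \<ge> 0" unfolding N_def by simp
      have gen: "norm (gterm a b y (Suc n)) = N * inverse (norm y) * inverse (norm (pochhammer (y + 1) n))" for y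
      proof -
        have "gterm a b y (Suc n) = (pochhammer a (Suc n) * pochhammer b (Suc n)) / ((y * pochhammer (y + 1) n) * fact (Suc n))"
          unfolding gterm_def pochhammer_rec[of y] ..
        hence "norm (gterm a b y (Suc n)) = norm (pochhammer a (Suc n) * pochhammer b (Suc n)) / ((norm y * norm (pochhammer (y + 1) n)) * norm (fact (Suc n) :: complex))"
          by (simp only: norm_divide norm_mult)
        thus ?thesis unfolding N_def by (simp add: divide_inverse inverse_mult_distrib mult_ac)
      qed
      have "norm (gterm a b x (Suc n)) = N * inverse (norm x) * inverse (norm (pochhammer (x + 1) n))"
        by (rule gen)
      also have "\<dots> \<le> N * inverse (norm x) * inverse (norm (pochhammer (c0 + 1) n))"
        using le N0 by (intro mult_left_mono) auto
      also have "\<dots> = (norm c0 * norm (inverse x)) * (N * inverse (norm c0) * inverse (norm (pochhammer (c0 + 1) n)))"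
        using c00 by (simp add: norm_inverse mult_ac)
      also have "N * inverse (norm c0) * inverse (norm (pochhammer (c0 + 1) n)) = norm (gterm a b c0 (Suc n))"
        by (rule gen[symmetric])
      finally show ?thesis .
    qed
    have "suminf (gterm a b x) - 1 = (\<Sum>n. gterm a b x (Suc n))"
    proof -
      have g0: "gterm a b x 0 = 1" by (simp add: gterm_def)
      show ?thesis using suminf_split_head[OF summable_norm_cancel[OF gterm_summable[OF x rex]]] g0
        by simp
    qed
    hence "norm (suminf (gterm a b x) - 1) \<le> (\<Sum>n. norm (gterm a b x (Suc n)))"
      using summable_norm[OF sx] by simp
    also have "\<dots> \<le> (\<Sum>n. (norm c0 * norm (inverse x)) * norm (gterm a b c0 (Suc n)))"
      by (intro suminf_le tb sx summable_mult sS)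
    also have "\<dots> = norm c0 * S * norm (inverse x)"
      unfolding S_def using sS by (subst suminf_mult) (auto simp: algebra_simps)
    finally show ?thesis unfolding x_def .
  qed
  have "(\<lambda>m. norm c0 * S * norm (inverse (c + of_nat m))) \<longlonglongrightarrow> norm c0 * S * 0"
    by (intro tendsto_mult tendsto_const tendsto_norm_zero inverse_plus_nat_tendsto)
  hence lim0: "(\<lambda>m. norm c0 * S * norm (inverse (c + of_nat m))) \<longlonglongrightarrow> 0" by simp
  have "(\<lambda>m. suminf (gterm a b (c + of_nat m)) - 1) \<longlonglongrightarrow> 0"
  proof (rule Lim_null_comparison[OF _ lim0])
    show "\<forall>\<^sub>F m in sequentially. norm (suminf (gterm a b (c + of_nat m)) - 1) \<le> norm c0 * S * norm (inverse (c + of_nat m))"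
      using eventually_ge_at_top[of m0] by eventually_elim (rule bound)
  qed
  thus ?thesis by (simp add: LIM_zero_iff)
qed

theorem gauss_sum:
  assumes c: "c \<notin> \<int>\<^sub>\<le>\<^sub>0" and re: "Re (c - a - b) > 0"
  shows "suminf (gterm a b c) = Gamma c * Gamma (c - a - b) * rGamma (c - a) * rGamma (c - b)"
proof -
  define G where "G = suminf (gterm a b c)"
  define L where "L k = complex_of_real (ln (real k))" for k
  have cab: "c - a - b \<notin> \<int>\<^sub>\<le>\<^sub>0" by (rule Re_pos_not_nonpos_Int) (use re in simp)
  have eq: "rGamma_series c k * rGamma_series (c - a - b) k * G
          = rGamma_series (c - a) k * rGamma_series (c - b) k * suminf (gterm a b (c + of_nat (Suc k)))" for k
  proof -
    have it: "G * pochhammer c (Suc k) * pochhammer (c - a - b) (Suc k)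
       = pochhammer (c - a) (Suc k) * pochhammer (c - b) (Suc k) * suminf (gterm a b (c + of_nat (Suc k)))"
      unfolding G_def by (rule gauss_iter[OF c re])
    have ex: "exp (c * L k) * exp ((c - a - b) * L k) = exp ((c - a) * L k) * exp ((c - b) * L k)"
      by (simp add: exp_add[symmetric] algebra_simps)
    define Q where "Q = (fact k * fact k * (exp (c * L k) * exp ((c - a - b) * L k)) :: complex)"
    have "rGamma_series c k * rGamma_series (c - a - b) k * G
        = (G * pochhammer c (Suc k) * pochhammer (c - a - b) (Suc k)) / Q"
      unfolding rGamma_series_def Q_def L_def by (simp add: field_simps)
    also have "\<dots> = (pochhammer (c - a) (Suc k) * pochhammer (c - b) (Suc k) * suminf (gterm a b (c + of_nat (Suc k)))) / Q"
      unfolding it ..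
    also have "\<dots> = rGamma_series (c - a) k * rGamma_series (c - b) k * suminf (gterm a b (c + of_nat (Suc k)))"
      unfolding rGamma_series_def Q_def ex unfolding L_def by (simp add: field_simps)
    finally show ?thesis .
  qed
  have l1: "(\<lambda>k. rGamma_series c k * rGamma_series (c - a - b) k * G) \<longlonglongrightarrow> rGamma c * rGamma (c - a - b) * G"
    by (intro tendsto_intros)
  have gl: "(\<lambda>k. suminf (gterm a b (c + of_nat (Suc k)))) \<longlonglongrightarrow> 1"
    using LIMSEQ_Suc[OF G_limit[OF c re]] .
  have l2: "(\<lambda>k. rGamma_series (c - a) k * rGamma_series (c - b) k * suminf (gterm a b (c + of_nat (Suc k))))
      \<longlonglongrightarrow> rGamma (c - a) * rGamma (c - b) * 1"
    by (intro tendsto_intros gl)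
  have "rGamma c * rGamma (c - a - b) * G = rGamma (c - a) * rGamma (c - b) * 1"
    using LIMSEQ_unique[OF l1[unfolded eq] l2] .
  moreover have "rGamma c \<noteq> 0" "rGamma (c - a - b) \<noteq> 0"
    using c cab by (auto simp: rGamma_eq_zero_iff)
  ultimately have "G = rGamma (c - a) * rGamma (c - b) / (rGamma c * rGamma (c - a - b))"
    by (simp add: field_simps)
  thus ?thesis unfolding G_def by (simp add: rGamma_inverse_Gamma field_simps)
qed

lemma unit_Re_gt:
  fixes u :: complex
  assumes "norm u = 1" "u \<noteq> -1"
  shows "Re u > -1"
proof -
  have h: "(Re u)^2 + (Im u)^2 = 1" using assms(1) cmod_power2[of u] by simp
  have "\<bar>Re u\<bar> \<le> 1" using abs_Re_le_cmod[of u] assms(1) by simp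
  moreover have "Re u \<noteq> -1"
  proof
    assume r: "Re u = -1"
    hence "Im u = 0" using h by simp
    hence "u = -1" using r complex_eq_iff by auto
    thus False using assms(2) by simp
  qed
  ultimately show ?thesis by linarith
qed

lemma gbinom_bound:
  fixes \<alpha> :: complex
  shows "\<exists>M. \<forall>j\<ge>1. norm (\<alpha> gchoose j) \<le> M * real j powr (- Re \<alpha> - 1)"
proof -
  have one: "(1::complex) \<notin> \<int>\<^sub>\<le>\<^sub>0" by (intro Re_pos_not_nonpos_Int) auto
  obtain M where M: "\<forall>n\<ge>1. norm (pochhammer (-\<alpha>) n / pochhammer 1 n) \<le> M * real n powr Re (-\<alpha> - 1)"
    using poch_ratio_bound[OF one] by blast
  have "norm (\<alpha> gchoose j) = norm (pochhammer (-\<alpha>) j / pochhammer 1 j)" for j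
    by (simp add: gbinomial_pochhammer pochhammer_fact norm_mult norm_divide norm_power)
  thus ?thesis using M by auto
qed

lemma gbinom_summable:
  fixes \<alpha> :: complex
  assumes "Re \<alpha> > 0"
  shows "summable (\<lambda>j. norm (\<alpha> gchoose j))"
proof -
  obtain M where M: "\<forall>j\<ge>1. norm (\<alpha> gchoose j) \<le> M * real j powr (- Re \<alpha> - 1)"
    using gbinom_bound by blast
  have "summable (\<lambda>n. real n powr (- Re \<alpha> - 1))"
    using assms by (subst summable_real_powr_iff) auto
  hence "summable (\<lambda>n. M * real n powr (- Re \<alpha> - 1))" by (rule summable_mult)
  thus ?thesis by (rule summable_comparison_test'[where N=1]) (use M in auto)
qed

lemma binom_boundary:
  fixes \<alpha> u :: complex
  assumes re: "Re \<alpha> > 0" and u: "norm u = 1" "u \<noteq> -1"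
  shows "(\<lambda>j. (\<alpha> gchoose j) * u ^ j) sums ((1 + u) powr \<alpha>)"
proof -
  define f where "f r = (\<Sum>j. (\<alpha> gchoose j) * (complex_of_real r * u) ^ j)" for r :: real
  have sn: "summable (\<lambda>j. norm (\<alpha> gchoose j))" by (rule gbinom_summable[OF re])
  have ul: "uniform_limit {0..1} (\<lambda>n r. \<Sum>j<n. (\<alpha> gchoose j) * (complex_of_real r * u) ^ j) f sequentially"
    unfolding f_def
  proof (rule Weierstrass_m_test[OF _ sn])
    fix j :: nat and r :: real assume r: "r \<in> {0..1}"
    have "norm ((\<alpha> gchoose j) * (complex_of_real r * u) ^ j) = norm (\<alpha> gchoose j) * \<bar>r\<bar> ^ j"
      using u by (simp add: norm_mult norm_power)
    also have "\<dots> \<le> norm (\<alpha> gchoose j) * 1"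
      using r by (intro mult_left_mono power_le_one) auto
    finally show "norm ((\<alpha> gchoose j) * (complex_of_real r * u) ^ j) \<le> norm (\<alpha> gchoose j)" by simp
  qed
  have cont: "continuous_on {0..1} f"
    by (rule uniform_limit_theorem[OF _ ul]) (auto intro!: always_eventually continuous_intros)
  have lf: "(f \<longlongrightarrow> f 1) (at_left 1)"
    by (rule continuous_on_Icc_at_leftD[OF cont]) simp
  have ev: "eventually (\<lambda>r. (1 + complex_of_real r * u) powr \<alpha> = f r) (at_left (1::real))"
    using eventually_at_left_real[of 0 "1::real", OF zero_less_one]
  proof (rule eventually_mono)
    fix r :: real assume "r \<in> {0<..<1}"
    hence "norm (complex_of_real r * u) < 1" using u by (simp add: norm_mult)
    from gen_binomial_complex[OF this, of \<alpha>] show "(1 + complex_of_real r * u) powr \<alpha> = f r"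
      unfolding f_def by (simp add: sums_iff)
  qed
  have base: "1 + u \<notin> \<real>\<^sub>\<le>\<^sub>0" using unit_Re_gt[OF u] by (auto simp: complex_nonpos_Reals_iff)
  have lg: "((\<lambda>r. (1 + complex_of_real r * u) powr \<alpha>) \<longlongrightarrow> (1 + u) powr \<alpha>) (at_left (1::real))"
  proof (rule tendsto_powr_complex[OF base _ tendsto_const])
    have "((\<lambda>r. 1 + complex_of_real r * u) \<longlongrightarrow> 1 + complex_of_real 1 * u) (at_left (1::real))"
      by (intro tendsto_intros)
    thus "((\<lambda>r. 1 + complex_of_real r * u) \<longlongrightarrow> 1 + u) (at_left (1::real))" by simp
  qed
  have "(f \<longlongrightarrow> (1 + u) powr \<alpha>) (at_left 1)"
    using tendsto_cong[OF ev] lg by simp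
  hence "f 1 = (1 + u) powr \<alpha>"
    using tendsto_unique[OF trivial_limit_at_left_real lf] by simp
  moreover have "summable (\<lambda>j. (\<alpha> gchoose j) * u ^ j)"
    by (rule summable_norm_cancel) (use sn u in \<open>simp add: norm_mult norm_power\<close>)
  ultimately show ?thesis unfolding f_def by (simp add: sums_iff)
qed

definition TT :: "complex \<Rightarrow> complex \<Rightarrow> int \<Rightarrow> complex" where
  "TT A C n = poch_int A n / poch_int C n"

definition Rc :: "complex \<Rightarrow> complex \<Rightarrow> complex" where
  "Rc A C = Gamma (C - A) * rGamma (1 - A) * rGamma C"

lemma TT_nonneg: "TT A C (int m) = pochhammer A m / pochhammer C m"
  by (simp add: TT_def poch_int_def)

lemma poch_shift_neg: "pochhammer (x - of_nat m) m = (-1) ^ m * pochhammer (1 - x :: complex) m"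
proof -
  have "pochhammer ((x - 1) - of_nat m + 1) m = (-1) ^ m * pochhammer (- (x - 1)) m"
    by (rule pochhammer_minus')
  thus ?thesis by (simp add: algebra_simps)
qed

lemma TT_neg: "TT A C (- int m) = pochhammer (1 - C) m / pochhammer (1 - A) m"
proof (cases "m = 0")
  case True thus ?thesis by (simp add: TT_def poch_int_def)
next
  case False
  hence "TT A C (- int m) = (1 / pochhammer (A - of_nat m) m) / (1 / pochhammer (C - of_nat m) m)"
    by (simp add: TT_def poch_int_def)
  also have "\<dots> = pochhammer (C - of_nat m) m / pochhammer (A - of_nat m) m" by simp
  also have "\<dots> = ((-1) ^ m * pochhammer (1 - C) m) / ((-1) ^ m * pochhammer (1 - A) m)"
    by (simp only: poch_shift_neg)
  also have "\<dots> = pochhammer (1 - C) m / pochhammer (1 - A) m"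
    by (rule mult_divide_mult_cancel_left) simp
  finally show ?thesis .
qed

lemma gterm_has_sum:
  assumes c: "c \<notin> \<int>\<^sub>\<le>\<^sub>0" and re: "Re (c - a - b) > 0"
  shows "(gterm a b c has_sum (Gamma c * Gamma (c - a - b) * rGamma (c - a) * rGamma (c - b))) UNIV"
proof (rule norm_summable_imp_has_sum[OF gterm_summable[OF c re]])
  show "gterm a b c sums (Gamma c * Gamma (c - a - b) * rGamma (c - a) * rGamma (c - b))"
    using summable_sums[OF summable_norm_cancel[OF gterm_summable[OF c re]]] gauss_sum[OF c re] by simp
qed

lemma gchoose_minus: "(- A) gchoose j = (-1) ^ j * pochhammer A j / fact j"
  by (simp add: gbinomial_pochhammer)

lemma gchoose_Cm1: "(C - 1) gchoose j = (-1) ^ j * pochhammer (1 - C) j / fact j"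
  by (simp add: gbinomial_pochhammer)

lemma Gamma_1_nat: "Gamma (1 + of_nat m :: complex) = fact m"
  using Gamma_of_int[of "int m + 1", where 'a=complex] by (simp add: add.commute)

lemma coef_pos:
  assumes reA: "Re A < 0" and reC: "Re (C - A) > 0" and C: "C \<notin> \<int>\<^sub>\<le>\<^sub>0"
  shows "((\<lambda>k. ((- A) gchoose (m + k)) * ((C - 1) gchoose k)) has_sum
           ((-1) ^ m * (pochhammer A m / pochhammer C m) * Rc A C)) UNIV"
proof -
  define c where "c = (1 + of_nat m :: complex)"
  have c: "c \<notin> \<int>\<^sub>\<le>\<^sub>0" unfolding c_def by (intro Re_pos_not_nonpos_Int) simp
  have re: "Re (c - (A + of_nat m) - (1 - C)) > 0" using reC by (simp add: c_def)
  have gc: "Gamma c = fact m" unfolding c_def by (rule Gamma_1_nat)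
  have e1: "c - (A + of_nat m) - (1 - C) = C - A" by (simp add: c_def)
  have e2: "c - (A + of_nat m) = 1 - A" by (simp add: c_def)
  have e3: "c - (1 - C) = C + of_nat m" by (simp add: c_def)
  have hs: "(gterm (A + of_nat m) (1 - C) c has_sum (fact m * Gamma (C - A) * rGamma (1 - A) * rGamma (C + of_nat m))) UNIV"
    using gterm_has_sum[OF c re] by (subst (asm) e1, subst (asm) e2, subst (asm) e3, subst (asm) gc)
  define K where "K = (-1) ^ m * pochhammer A m / fact m"
  have tm: "((- A) gchoose (m + k)) * ((C - 1) gchoose k) = K * gterm (A + of_nat m) (1 - C) c k" for k
  proof -
    have pf: "(fact (m + k) :: complex) = fact m * pochhammer c k"
      unfolding c_def pochhammer_fact pochhammer_product' by (simp add: add.commute)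
    have pk: "pochhammer c k \<noteq> 0" using c by (auto simp: pochhammer_eq_0_iff)
    have s: "((-1::complex) ^ (m + k)) * (-1) ^ k = (-1) ^ m"
      by (simp add: power_add mult.assoc power_mult_distrib[symmetric])
    have "((- A) gchoose (m + k)) * ((C - 1) gchoose k)
        = (((-1::complex) ^ (m + k)) * (-1) ^ k) * (pochhammer A m * pochhammer (A + of_nat m) k)
          * pochhammer (1 - C) k / ((fact m * pochhammer c k) * fact k)"
      unfolding gchoose_minus gchoose_Cm1 pochhammer_product' pf by (simp add: field_simps)
    also have "\<dots> = K * gterm (A + of_nat m) (1 - C) c k"
      unfolding s K_def gterm_def using pk by (simp add: field_simps)
    finally show ?thesis .
  qed
  have pC: "pochhammer C m \<noteq> 0" using C by (auto simp: pochhammer_eq_0_iff)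
  have rg: "rGamma (C + of_nat m) = rGamma C / pochhammer C m"
    using pochhammer_rGamma[of C m] pC by (simp add: field_simps)
  have "K * (fact m * Gamma (C - A) * rGamma (1 - A) * rGamma (C + of_nat m))
      = (-1) ^ m * (pochhammer A m / pochhammer C m) * Rc A C"
    unfolding K_def rg Rc_def by (simp add: field_simps)
  thus ?thesis using has_sum_cmult_right[OF hs, of K] unfolding tm by simp
qed

lemma coef_neg:
  assumes reA: "Re A < 0" and reC: "Re (C - A) > 0"
  shows "((\<lambda>j. ((- A) gchoose j) * ((C - 1) gchoose (j + m))) has_sum
           ((-1) ^ m * (pochhammer (1 - C) m / pochhammer (1 - A) m) * Rc A C)) UNIV"
proof -
  define c where "c = (1 + of_nat m :: complex)"
  have c: "c \<notin> \<int>\<^sub>\<le>\<^sub>0" unfolding c_def by (intro Re_pos_not_nonpos_Int) simp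
  have re: "Re (c - A - (1 - C + of_nat m)) > 0" using reC by (simp add: c_def)
  have gc: "Gamma c = fact m" unfolding c_def by (rule Gamma_1_nat)
  have e1: "c - A - (1 - C + of_nat m) = C - A" by (simp add: c_def)
  have e2: "c - A = (1 - A) + of_nat m" by (simp add: c_def)
  have e3: "c - (1 - C + of_nat m) = C" by (simp add: c_def)
  have hs: "(gterm A (1 - C + of_nat m) c has_sum (fact m * Gamma (C - A) * rGamma ((1 - A) + of_nat m) * rGamma C)) UNIV"
    using gterm_has_sum[OF c re] by (subst (asm) e1, subst (asm) e2, subst (asm) e3, subst (asm) gc)
  define K where "K = (-1) ^ m * pochhammer (1 - C) m / fact m"
  have tm: "((- A) gchoose j) * ((C - 1) gchoose (j + m)) = K * gterm A (1 - C + of_nat m) c j" for j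
  proof -
    have pf: "(fact (m + j) :: complex) = fact m * pochhammer c j"
      unfolding c_def pochhammer_fact pochhammer_product' by (simp add: add.commute)
    have pk: "pochhammer c j \<noteq> 0" using c by (auto simp: pochhammer_eq_0_iff)
    have s: "((-1::complex) ^ j) * (-1) ^ (m + j) = (-1) ^ m"
      by (simp add: power_add mult.assoc power_mult_distrib[symmetric] mult.left_commute)
    have jm: "j + m = m + j" by simp
    have "((- A) gchoose j) * ((C - 1) gchoose (j + m))
        = (((-1::complex) ^ j) * (-1) ^ (m + j)) * pochhammer A j
          * (pochhammer (1 - C) m * pochhammer (1 - C + of_nat m) j) / (fact j * (fact m * pochhammer c j))"
      unfolding gchoose_minus gchoose_Cm1 jm pochhammer_product' pf by (simp add: field_simps)
    also have "\<dots> = K * gterm A (1 - C + of_nat m) c j"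
      unfolding s K_def gterm_def using pk by (simp add: field_simps)
    finally show ?thesis .
  qed
  have pA: "pochhammer (1 - A) m \<noteq> 0"
  proof -
    have "1 - A \<notin> \<int>\<^sub>\<le>\<^sub>0" by (intro Re_pos_not_nonpos_Int) (use reA in simp)
    thus ?thesis by (auto simp: pochhammer_eq_0_iff)
  qed
  have rg: "rGamma ((1 - A) + of_nat m) = rGamma (1 - A) / pochhammer (1 - A) m"
    using pochhammer_rGamma[of "1 - A" m] pA by (simp add: field_simps)
  have "K * (fact m * Gamma (C - A) * rGamma ((1 - A) + of_nat m) * rGamma C)
      = (-1) ^ m * (pochhammer (1 - C) m / pochhammer (1 - A) m) * Rc A C"
    unfolding K_def rg Rc_def by (simp add: field_simps)
  thus ?thesis using has_sum_cmult_right[OF hs, of K] unfolding tm by simp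
qed

lemma norm_has_sum_nat:
  fixes f :: "nat \<Rightarrow> complex"
  assumes "summable (\<lambda>n. norm (f n))"
  shows "((\<lambda>n. norm (f n)) has_sum (\<Sum>n. norm (f n))) UNIV"
  by (rule norm_summable_imp_has_sum) (use assms in \<open>auto intro: summable_sums\<close>)

lemma has_sum_prod_nat:
  fixes f g :: "nat \<Rightarrow> complex"
  assumes sf: "summable (\<lambda>n. norm (f n))" and sg: "summable (\<lambda>n. norm (g n))"
      and hf: "(f has_sum F) UNIV" and hg: "(g has_sum G) UNIV"
  shows "((\<lambda>(j,k). f j * g k) has_sum (F * G)) (UNIV \<times> UNIV)"
proof -
  define SG where "SG = (\<Sum>n. norm (g n))"
  have nf: "((\<lambda>n. norm (f n)) has_sum (\<Sum>n. norm (f n))) UNIV" by (rule norm_has_sum_nat[OF sf])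
  have ng: "((\<lambda>n. norm (g n)) has_sum SG) UNIV" unfolding SG_def by (rule norm_has_sum_nat[OF sg])
  have abs: "(\<lambda>(j,k). norm (f j * g k)) summable_on (UNIV \<times> UNIV)"
  proof (rule summable_on_SigmaI[where g = "\<lambda>j. norm (f j) * SG"])
    fix j :: nat
    show "((\<lambda>k. (\<lambda>(j,k). norm (f j * g k)) (j, k)) has_sum norm (f j) * SG) UNIV"
      using has_sum_cmult_right[OF ng, of "norm (f j)"] by (simp add: norm_mult)
  next
    show "(\<lambda>j. norm (f j) * SG) summable_on UNIV"
      using has_sum_cmult_left[OF nf, of SG] by (rule has_sum_imp_summable)
  qed auto
  have summ: "(\<lambda>(j,k). f j * g k) summable_on (UNIV \<times> UNIV)"
  proof -
    have "(\<lambda>x. norm ((\<lambda>(j,k). f j * g k) x)) = (\<lambda>(j,k). norm (f j * g k))"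
      by (auto simp: case_prod_unfold)
    thus ?thesis using abs by (simp add: summable_on_iff_abs_summable_on_complex)
  qed
  show ?thesis
  proof (rule has_sum_SigmaI[where g = "\<lambda>j. f j * G"])
    fix j :: nat
    show "((\<lambda>k. (\<lambda>(j,k). f j * g k) (j, k)) has_sum f j * G) UNIV"
      using has_sum_cmult_right[OF hg, of "f j"] by simp
  next
    show "((\<lambda>j. f j * G) has_sum F * G) UNIV" by (rule has_sum_cmult_left[OF hf])
  next
    show "(\<lambda>(j,k). f j * g k) summable_on UNIV \<times> UNIV" by (rule summ)
  qed
qed

lemma has_sum_shift_nat:
  fixes g :: "nat \<Rightarrow> complex"
  assumes z: "\<And>k. k < m \<Longrightarrow> g k = 0" and h: "((\<lambda>j. g (j + m)) has_sum S) UNIV"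
  shows "(g has_sum S) UNIV"
proof -
  have inj: "inj (\<lambda>j::nat. j + m)" by (auto simp: inj_def)
  have "(g has_sum S) (range (\<lambda>j. j + m))"
    using h by (subst has_sum_reindex[OF inj]) (simp add: o_def)
  moreover have "range (\<lambda>j::nat. j + m) = {m..}"
  proof (intro equalityI subsetI)
    fix x assume "x \<in> {m..}"
    thus "x \<in> range (\<lambda>j::nat. j + m)" by (intro image_eqI[of _ _ "x - m"]) auto
  qed auto
  ultimately have "(g has_sum S) {m..}" by simp
  thus ?thesis
    by (subst (asm) has_sum_cong_neutral[where T = UNIV and g = g]) (auto intro: z)
qed

definition coefT :: "complex \<Rightarrow> complex \<Rightarrow> int \<Rightarrow> complex" where
  "coefT A C n = (-1) powi n * TT A C n * Rc A C"

definition phi :: "complex \<Rightarrow> complex \<Rightarrow> complex \<Rightarrow> complex" where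
  "phi A C u = (1 + u) powr (- A) * (1 + cnj u) powr (C - 1)"

lemma minus_one_powi_neg: "(-1::complex) powi (- int m) = (-1) ^ m"
  by (simp add: power_int_minus power_inverse[symmetric])

lemma cnj_unit: "norm u = 1 \<Longrightarrow> cnj u = inverse u"
proof -
  assume u: "norm u = 1"
  have "u * cnj u = of_real ((norm u)^2)" by (rule complex_norm_square[symmetric])
  hence "u * cnj u = 1" using u by simp
  thus ?thesis by (metis inverse_unique)
qed

lemma base_case:
  assumes reA: "Re A < 0" and reC: "Re C > 1" and u: "norm u = 1" "u \<noteq> -1"
  shows "((\<lambda>n. coefT A C n * u powi n) has_sum phi A C u) UNIV"
proof -
  define \<alpha> where "\<alpha> = - A"
  define \<beta> where "\<beta> = C - 1"
  define v where "v = cnj u"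
  have rea: "Re \<alpha> > 0" using reA by (simp add: \<alpha>_def)
  have reb: "Re \<beta> > 0" using reC by (simp add: \<beta>_def)
  have v1: "norm v = 1" using u by (simp add: v_def)
  have v2: "v \<noteq> -1"
  proof
    assume "v = -1"
    hence "u = cnj (-1)" unfolding v_def by (metis complex_cnj_cnj)
    thus False using u by simp
  qed
  note v = v1 v2
  have u0: "u \<noteq> 0" using u by auto
  have vinv: "v = inverse u" unfolding v_def by (rule cnj_unit[OF u(1)])
  have C: "C \<notin> \<int>\<^sub>\<le>\<^sub>0" by (rule Re_pos_not_nonpos_Int) (use reC in simp)
  have reCA: "Re (C - A) > 0" using reA reC by simp
  define fP where "fP j = (\<alpha> gchoose j) * u ^ j" for j
  define gQ where "gQ k = (\<beta> gchoose k) * v ^ k" for k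
  have sfP: "summable (\<lambda>j. norm (fP j))"
    using gbinom_summable[OF rea] u by (simp add: fP_def norm_mult norm_power)
  have sgQ: "summable (\<lambda>j. norm (gQ j))"
    using gbinom_summable[OF reb] v by (simp add: gQ_def norm_mult norm_power)
  have hP: "(fP has_sum (1 + u) powr \<alpha>) UNIV"
    by (rule norm_summable_imp_has_sum[OF sfP]) (unfold fP_def, rule binom_boundary[OF rea u])
  have hQ: "(gQ has_sum (1 + v) powr \<beta>) UNIV"
    by (rule norm_summable_imp_has_sum[OF sgQ]) (unfold gQ_def, rule binom_boundary[OF reb v])
  have hPQ: "((\<lambda>(j,k). fP j * gQ k) has_sum phi A C u) (UNIV \<times> UNIV)"
    using has_sum_prod_nat[OF sfP sgQ hP hQ] by (simp add: phi_def \<alpha>_def \<beta>_def v_def)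
  define h where "h p = (if 0 \<le> fst p + int (snd p) then \<alpha> gchoose nat (fst p + int (snd p)) else 0)
                          * (\<beta> gchoose snd p) * u powi fst p" for p :: "int \<times> nat"
  define B where "B = {p :: int \<times> nat. 0 \<le> fst p + int (snd p)}"
  have "((\<lambda>(j,k). fP j * gQ k) has_sum phi A C u) (UNIV \<times> UNIV) = (h has_sum phi A C u) B"
  proof (rule has_sum_reindex_bij_witness[where i = "\<lambda>p. (nat (fst p + int (snd p)), snd p)"
                                           and j = "\<lambda>p. (int (fst p) - int (snd p), snd p)"])
    fix a :: "nat \<times> nat"
    obtain j k where a: "a = (j, k)" by (cases a)
    have "u powi (int j - int k) = u ^ j * v ^ k"
      using u0 by (simp add: power_int_diff vinv power_inverse divide_inverse)
    thus "h (int (fst a) - int (snd a), snd a) = (\<lambda>(j,k). fP j * gQ k) a"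
      unfolding a h_def fP_def gQ_def by simp
  qed (auto simp: B_def)
  hence hB: "(h has_sum phi A C u) B" using hPQ by simp
  have hU: "(h has_sum phi A C u) (UNIV \<times> UNIV)"
    using hB by (subst (asm) has_sum_cong_neutral[where T = "UNIV \<times> UNIV" and g = h]) (auto simp: B_def h_def)
  show ?thesis
  proof (rule has_sum_SigmaD[OF hU])
    fix n :: int
    show "((\<lambda>k. h (n, k)) has_sum coefT A C n * u powi n) UNIV"
    proof (cases "n \<ge> 0")
      case True
      then obtain m where n: "n = int m" by (metis nonneg_int_cases)
      have e: "h (n, k) = ((- A) gchoose (m + k)) * ((C - 1) gchoose k) * u powi n" for k
        unfolding h_def n \<alpha>_def \<beta>_def by (simp add: nat_add_distrib)
      have c: "coefT A C n = (-1) ^ m * (pochhammer A m / pochhammer C m) * Rc A C"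
        unfolding coefT_def n TT_nonneg by simp
      show ?thesis unfolding e c
        by (rule has_sum_cmult_left[OF coef_pos[OF reA reCA C]])
    next
      case False
      define m where "m = nat (- n)"
      have n: "n = - int m" using False by (simp add: m_def)
      have c: "coefT A C n = (-1) ^ m * (pochhammer (1 - C) m / pochhammer (1 - A) m) * Rc A C"
        unfolding coefT_def n TT_neg minus_one_powi_neg by simp
      show ?thesis unfolding c
      proof (rule has_sum_shift_nat[where m = m])
        fix k assume "k < m"
        thus "h (n, k) = 0" by (simp add: h_def n)
      next
        have e: "h (n, j + m) = ((- A) gchoose j) * ((C - 1) gchoose (j + m)) * u powi n" for j
          unfolding h_def n \<alpha>_def \<beta>_def by simp
        show "((\<lambda>j. h (n, j + m)) has_sum (-1) ^ m * (pochhammer (1 - C) m / pochhammer (1 - A) m) * Rc A C * u powi n) UNIV"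
          unfolding e by (rule has_sum_cmult_left[OF coef_neg[OF reA reCA]])
      qed
    qed
  qed
qed

lemma alg1:
  fixes A C pA pC m :: complex
  assumes "pC \<noteq> 0" "C + m \<noteq> 0" "A - 1 \<noteq> 0"
  shows "(A + m) * pA / ((C + m) * pC) - pA / pC = (A - C) / (A - 1) * ((A - 1) * pA / ((C + m) * pC))"
proof -
  have "(A + m) * pA / ((C + m) * pC) - pA / pC = (A - C) * pA / ((C + m) * pC)"
    using assms by (simp add: divide_simps) (simp add: algebra_simps)
  also have "\<dots> = (A - C) / (A - 1) * ((A - 1) * pA / ((C + m) * pC))"
    using assms by (simp add: divide_simps)
  finally show ?thesis .
qed

lemma alg2:
  fixes A C pA pC m :: complex
  assumes "pA \<noteq> 0" "1 - A + m \<noteq> 0" "1 - A \<noteq> 0"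
  shows "pC / pA - ((1 - C + m) * pC) / ((1 - A + m) * pA)
       = (A - C) / (A - 1) * (pC / ((1 - A + m) * pA / (1 - A)))"
proof -
  have "pC / pA - ((1 - C + m) * pC) / ((1 - A + m) * pA) = (C - A) * pC / ((1 - A + m) * pA)"
    using assms by (simp add: divide_simps) (simp add: algebra_simps)
  also have "\<dots> = (A - C) / (A - 1) * (pC / ((1 - A + m) * pA / (1 - A)))"
  proof -
    have "A - 1 \<noteq> 0" using assms(3) by (simp add: right_minus_eq)
    thus ?thesis using assms by (simp add: divide_simps) (simp add: algebra_simps)
  qed
  finally show ?thesis .
qed

lemma alg3:
  fixes A C pA pC m :: complex
  assumes "pC \<noteq> 0" "C + m \<noteq> 0" "C \<noteq> 0"
  shows "(A + m) * pA / ((C + m) * pC) - pA / pC = (A - C) / C * (pA / ((C + m) * pC / C))"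
proof -
  have "(A + m) * pA / ((C + m) * pC) - pA / pC = (A - C) * pA / ((C + m) * pC)"
    using assms by (simp add: divide_simps) (simp add: algebra_simps)
  also have "\<dots> = (A - C) / C * (pA / ((C + m) * pC / C))"
    using assms by (simp add: divide_simps)
  finally show ?thesis .
qed

lemma alg4:
  fixes A C pA pC m :: complex
  assumes "pA \<noteq> 0" "1 - A + m \<noteq> 0" "C \<noteq> 0"
  shows "pC / pA - ((1 - C + m) * pC) / ((1 - A + m) * pA)
       = (A - C) / C * ((- C) * pC / ((1 - A + m) * pA))"
proof -
  have "pC / pA - ((1 - C + m) * pC) / ((1 - A + m) * pA) = (C - A) * pC / ((1 - A + m) * pA)"
    using assms by (simp add: divide_simps) (simp add: algebra_simps)
  also have "\<dots> = (A - C) / C * ((- C) * pC / ((1 - A + m) * pA))"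
    using assms by (simp add: divide_simps) (simp add: algebra_simps)
  finally show ?thesis .
qed

definition KK :: "complex \<Rightarrow> complex \<Rightarrow> complex" where
  "KK A C = Gamma C * Gamma (1 - A) / Gamma (C - A)"

lemma int_cases_pos_nonpos:
  fixes n :: int
  obtains m where "n = int (Suc m)" | m where "n = - int m"
proof (cases "n \<ge> 1")
  case True
  hence "n = int (Suc (nat (n - 1)))" by simp
  thus ?thesis using that by blast
next
  case False
  hence "n = - int (nat (- n))" by simp
  thus ?thesis using that by blast
qed

lemma notposint_ne:
  fixes A :: complex
  assumes A: "\<forall>n::nat. n \<ge> 1 \<longrightarrow> A \<noteq> of_nat n"
  shows "1 - A \<notin> \<int>\<^sub>\<le>\<^sub>0"
proof
  assume "1 - A \<in> \<int>\<^sub>\<le>\<^sub>0"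
  then obtain k where "1 - A = - of_nat k" by (elim nonpos_Ints_cases')
  hence "A = of_nat (Suc k)" by (simp add: algebra_simps)
  thus False using A by auto
qed

lemma TT_pos_Suc: "TT A C (int (Suc m)) = (A + of_nat m) * pochhammer A m / ((C + of_nat m) * pochhammer C m)"
  unfolding TT_nonneg pochhammer_rec' ..

lemma TT_neg_Suc: "TT A C (- int (Suc m)) = (1 - C + of_nat m) * pochhammer (1 - C) m / ((1 - A + of_nat m) * pochhammer (1 - A) m)"
  unfolding TT_neg pochhammer_rec' ..

lemma TT_shiftA:
  fixes A C :: complex
  assumes A: "\<forall>n::nat. n \<ge> 1 \<longrightarrow> A \<noteq> of_nat n" and C: "C \<notin> \<int>\<^sub>\<le>\<^sub>0"
  shows "TT A C n - TT A C (n - 1) = (A - C) / (A - 1) * TT (A - 1) C n"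
proof -
  have A1: "A - 1 \<noteq> 0" using A by (metis of_nat_1 order_refl right_minus_eq)
  have nA: "1 - A \<notin> \<int>\<^sub>\<le>\<^sub>0" by (rule notposint_ne[OF A])
  have A1': "1 - A \<noteq> 0" using nonpos_Int_ne[OF nA, of 0] by simp
  show ?thesis
  proof (cases n rule: int_cases_pos_nonpos)
    case (1 m)
    have pC: "pochhammer C m \<noteq> 0" using C by (auto simp: pochhammer_eq_0_iff)
    have Cm: "C + of_nat m \<noteq> 0" by (rule nonpos_Int_ne[OF C])
    have L1: "TT A C n = (A + of_nat m) * pochhammer A m / ((C + of_nat m) * pochhammer C m)"
      unfolding 1 by (rule TT_pos_Suc)
    have L2: "TT A C (n - 1) = pochhammer A m / pochhammer C m"
      using 1 TT_nonneg[of A C m] by simp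
    have pa1: "pochhammer (A - 1) (Suc m) = (A - 1) * pochhammer A m" by (simp add: pochhammer_rec)
    have R: "TT (A - 1) C n = (A - 1) * pochhammer A m / ((C + of_nat m) * pochhammer C m)"
      unfolding 1 TT_nonneg pa1 pochhammer_rec'[of C m] ..
    show ?thesis unfolding L1 L2 R by (rule alg1[OF pC Cm A1])
  next
    case (2 m)
    have pA: "pochhammer (1 - A) m \<noteq> 0" using nA by (auto simp: pochhammer_eq_0_iff)
    have Am: "1 - A + of_nat m \<noteq> 0" by (rule nonpos_Int_ne[OF nA])
    have L1: "TT A C n = pochhammer (1 - C) m / pochhammer (1 - A) m"
      unfolding 2 by (rule TT_neg)
    have nm: "n - 1 = - int (Suc m)" using 2 by simp
    have L2: "TT A C (n - 1) = (1 - C + of_nat m) * pochhammer (1 - C) m / ((1 - A + of_nat m) * pochhammer (1 - A) m)"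
      unfolding nm by (rule TT_neg_Suc)
    have e1: "pochhammer (1 - (A - 1)) m = (1 - A + of_nat m) * pochhammer (1 - A) m / (1 - A)"
    proof -
      have "(1 - A) * pochhammer (1 - (A - 1)) m = pochhammer (1 - A) (Suc m)"
        by (simp add: pochhammer_rec algebra_simps)
      also have "\<dots> = (1 - A + of_nat m) * pochhammer (1 - A) m" by (simp add: pochhammer_rec')
      finally show ?thesis using A1' by (simp add: field_simps)
    qed
    have R: "TT (A - 1) C n = pochhammer (1 - C) m / ((1 - A + of_nat m) * pochhammer (1 - A) m / (1 - A))"
      unfolding 2 TT_neg e1 ..
    show ?thesis unfolding L1 L2 R by (rule alg2[OF pA Am A1'])
  qed
qed

lemma TT_shiftC:
  fixes A C :: complex
  assumes A: "\<forall>n::nat. n \<ge> 1 \<longrightarrow> A \<noteq> of_nat n" and C: "C \<notin> \<int>\<^sub>\<le>\<^sub>0"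
  shows "TT A C n - TT A C (n - 1) = (A - C) / C * TT A (C + 1) (n - 1)"
proof -
  have C0: "C \<noteq> 0" using nonpos_Int_ne[OF C, of 0] by simp
  have nA: "1 - A \<notin> \<int>\<^sub>\<le>\<^sub>0" by (rule notposint_ne[OF A])
  show ?thesis
  proof (cases n rule: int_cases_pos_nonpos)
    case (1 m)
    have pC: "pochhammer C m \<noteq> 0" using C by (auto simp: pochhammer_eq_0_iff)
    have Cm: "C + of_nat m \<noteq> 0" by (rule nonpos_Int_ne[OF C])
    have L1: "TT A C n = (A + of_nat m) * pochhammer A m / ((C + of_nat m) * pochhammer C m)"
      unfolding 1 by (rule TT_pos_Suc)
    have L2: "TT A C (n - 1) = pochhammer A m / pochhammer C m"
      using 1 TT_nonneg[of A C m] by simp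
    have e1: "pochhammer (C + 1) m = (C + of_nat m) * pochhammer C m / C"
    proof -
      have "C * pochhammer (C + 1) m = pochhammer C (Suc m)" by (simp add: pochhammer_rec)
      also have "\<dots> = (C + of_nat m) * pochhammer C m" by (simp add: pochhammer_rec')
      finally show ?thesis using C0 by (simp add: field_simps)
    qed
    have R: "TT A (C + 1) (n - 1) = pochhammer A m / ((C + of_nat m) * pochhammer C m / C)"
      using 1 TT_nonneg[of A "C + 1" m] e1 by simp
    show ?thesis unfolding L1 L2 R by (rule alg3[OF pC Cm C0])
  next
    case (2 m)
    have pA: "pochhammer (1 - A) m \<noteq> 0" using nA by (auto simp: pochhammer_eq_0_iff)
    have Am: "1 - A + of_nat m \<noteq> 0" by (rule nonpos_Int_ne[OF nA])
    have L1: "TT A C n = pochhammer (1 - C) m / pochhammer (1 - A) m"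
      unfolding 2 by (rule TT_neg)
    have nm: "n - 1 = - int (Suc m)" using 2 by simp
    have L2: "TT A C (n - 1) = (1 - C + of_nat m) * pochhammer (1 - C) m / ((1 - A + of_nat m) * pochhammer (1 - A) m)"
      unfolding nm by (rule TT_neg_Suc)
    have e1: "pochhammer (1 - (C + 1)) (Suc m) = (- C) * pochhammer (1 - C) m"
      by (simp add: pochhammer_rec)
    have R: "TT A (C + 1) (n - 1) = (- C) * pochhammer (1 - C) m / ((1 - A + of_nat m) * pochhammer (1 - A) m)"
    proof -
      have "TT A (C + 1) (n - 1) = pochhammer (1 - (C + 1)) (Suc m) / pochhammer (1 - A) (Suc m)"
        using TT_neg[of A "C + 1" "Suc m"] unfolding nm .
      thus ?thesis unfolding e1 by (simp add: pochhammer_rec')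
    qed
    show ?thesis unfolding L1 L2 R by (rule alg4[OF pA Am C0])
  qed
qed

lemma has_sum_diff':
  fixes f g :: "'a \<Rightarrow> complex"
  assumes "(f has_sum a) A" "(g has_sum b) A"
  shows "((\<lambda>x. f x - g x) has_sum (a - b)) A"
proof -
  have "((\<lambda>x. - g x) has_sum (- b)) A" using assms(2) by (simp add: has_sum_uminus)
  from has_sum_add[OF assms(1) this] show ?thesis by simp
qed

lemma has_sum_shift_int:
  fixes g :: "int \<Rightarrow> complex"
  assumes w: "w \<noteq> 0" and h: "((\<lambda>n. g n * w powi n) has_sum S) UNIV"
  shows "((\<lambda>n. g (n - 1) * w powi n) has_sum (w * S)) UNIV"
proof -
  have inj: "inj (\<lambda>n::int. n - 1)" by (auto simp: inj_def)
  have surj: "range (\<lambda>n::int. n - 1) = UNIV"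
  proof (intro equalityI subsetI)
    fix x :: int show "x \<in> range (\<lambda>n. n - 1)" by (intro image_eqI[of _ _ "x + 1"]) auto
  qed auto
  have "((\<lambda>n. g n * w powi n) has_sum S) (range (\<lambda>n::int. n - 1))" using h surj by simp
  hence "(((\<lambda>n. g n * w powi n) \<circ> (\<lambda>n. n - 1)) has_sum S) UNIV"
    by (subst (asm) has_sum_reindex[OF inj])
  hence "((\<lambda>n. w * (g (n - 1) * w powi (n - 1))) has_sum w * S) UNIV"
    by (intro has_sum_cmult_right) (simp add: o_def)
  moreover have "w * (g (n - 1) * w powi (n - 1)) = g (n - 1) * w powi n" for n
  proof -
    have "w powi n = w powi ((n - 1) + 1)" by simp
    also have "\<dots> = w * w powi (n - 1)" using w by (rule power_int_add_1'[OF disjI1])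
    finally show ?thesis by (simp add: mult_ac)
  qed
  ultimately show ?thesis by simp
qed

lemma TT_summable:
  fixes A C w :: complex
  assumes A: "\<forall>n::nat. n \<ge> 1 \<longrightarrow> A \<noteq> of_nat n" and C: "C \<notin> \<int>\<^sub>\<le>\<^sub>0"
    and re: "Re (C - A) > 1" and w: "norm w = 1"
  shows "(\<lambda>n. TT A C n * w powi n) summable_on UNIV"
proof -
  define f where "f n = norm (TT A C n)" for n
  have nA: "1 - A \<notin> \<int>\<^sub>\<le>\<^sub>0" by (rule notposint_ne[OF A])
  obtain M1 where M1: "\<forall>n\<ge>1. norm (pochhammer A n / pochhammer C n) \<le> M1 * real n powr Re (A - C)"
    using poch_ratio_bound[OF C] by blast
  obtain M2 where M2: "\<forall>n\<ge>1. norm (pochhammer (1 - C) n / pochhammer (1 - A) n) \<le> M2 * real n powr Re ((1 - C) - (1 - A))"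
    using poch_ratio_bound[OF nA] by blast
  have sp: "summable (\<lambda>n. M * real n powr Re (A - C))" for M
    using re by (intro summable_mult) (subst summable_real_powr_iff, simp)
  have s1: "summable (\<lambda>m. f (int m))"
    by (rule summable_comparison_test'[where N=1, OF sp[of M1]]) (use M1 in \<open>auto simp: f_def TT_nonneg\<close>)
  have s2: "summable (\<lambda>m. f (- int m))"
    by (rule summable_comparison_test'[where N=1, OF sp[of M2]]) (use M2 in \<open>auto simp: f_def TT_neg\<close>)
  have f0: "f n \<ge> 0" for n by (simp add: f_def)
  have u1: "f summable_on range int"
    using s1 f0 by (subst summable_on_reindex) (auto simp: o_def summable_on_UNIV_nonneg_real_iff)
  have inj2: "inj (\<lambda>m::nat. - int m)" by (auto simp: inj_def)
  have u2: "f summable_on range (\<lambda>m::nat. - int m)"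
    using s2 f0 by (subst summable_on_reindex[OF inj2]) (auto simp: o_def summable_on_UNIV_nonneg_real_iff)
  have un: "range int \<union> range (\<lambda>m::nat. - int m) = UNIV"
  proof (intro equalityI subsetI)
    fix x :: int
    show "x \<in> range int \<union> range (\<lambda>m::nat. - int m)"
    proof (cases "x \<ge> 0")
      case True thus ?thesis by (auto intro: image_eqI[of _ _ "nat x"])
    next
      case False thus ?thesis by (auto intro!: image_eqI[of _ _ "nat (- x)"])
    qed
  qed auto
  have "f summable_on UNIV" using summable_on_union[OF u1 u2] un by simp
  moreover have "(\<lambda>n. norm (TT A C n * w powi n)) = f"
    using w by (auto simp: f_def norm_mult norm_power_int)
  ultimately show ?thesis by (simp add: summable_on_iff_abs_summable_on_complex)
qed

definition Sprop :: "complex \<Rightarrow> complex \<Rightarrow> bool" where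
  "Sprop A C \<longleftrightarrow> (\<forall>u. norm u = 1 \<and> u \<noteq> -1 \<longrightarrow>
      ((\<lambda>n. TT A C n * (- u) powi n) has_sum (KK A C * phi A C u)) UNIV)"

lemma Sprop_base:
  assumes reA: "Re A < 0" and reC: "Re C > 1"
  shows "Sprop A C"
  unfolding Sprop_def
proof (intro allI impI, elim conjE)
  fix u :: complex assume u: "norm u = 1" "u \<noteq> -1"
  have C: "C \<notin> \<int>\<^sub>\<le>\<^sub>0" by (rule Re_pos_not_nonpos_Int) (use reC in simp)
  have nA: "1 - A \<notin> \<int>\<^sub>\<le>\<^sub>0" by (rule Re_pos_not_nonpos_Int) (use reA in simp)
  have CA: "C - A \<notin> \<int>\<^sub>\<le>\<^sub>0" by (rule Re_pos_not_nonpos_Int) (use reA reC in simp)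
  have g1: "Gamma C \<noteq> 0" "Gamma (1 - A) \<noteq> 0" "Gamma (C - A) \<noteq> 0"
    using C nA CA by (auto simp: Gamma_eq_zero_iff)
  have R0: "Rc A C \<noteq> 0" using g1 by (simp add: Rc_def rGamma_inverse_Gamma)
  have RK: "Rc A C * KK A C = 1" using g1 by (simp add: Rc_def KK_def rGamma_inverse_Gamma field_simps)
  have eq: "coefT A C n * u powi n = Rc A C * (TT A C n * (- u) powi n)" for n
  proof -
    have "(- u) powi n = (-1) powi n * u powi n"
      using power_int_mult_distrib[of "-1" u n] by simp
    thus ?thesis by (simp add: coefT_def mult_ac)
  qed
  have "((\<lambda>n. Rc A C * (TT A C n * (- u) powi n)) has_sum phi A C u) UNIV"
    using base_case[OF reA reC u] unfolding eq .
  hence "((\<lambda>n. TT A C n * (- u) powi n) has_sum (phi A C u / Rc A C)) UNIV"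
    by (subst (asm) has_sum_cmult_right_iff[OF R0])
  moreover have "phi A C u / Rc A C = KK A C * phi A C u"
    using RK R0 by (simp add: field_simps)
  ultimately show "((\<lambda>n. TT A C n * (- u) powi n) has_sum (KK A C * phi A C u)) UNIV" by simp
qed

lemma notposint_minus1:
  fixes A :: complex
  assumes A: "\<forall>n::nat. n \<ge> 1 \<longrightarrow> A \<noteq> of_nat n"
  shows "\<forall>n::nat. n \<ge> 1 \<longrightarrow> A - 1 \<noteq> of_nat n"
proof (intro allI impI)
  fix n :: nat assume "n \<ge> 1"
  show "A - 1 \<noteq> of_nat n"
  proof
    assume "A - 1 = of_nat n"
    hence "A = of_nat (Suc n)" by (simp add: algebra_simps)
    thus False using A by auto
  qed
qed

lemma ratio1:
  fixes a c :: complex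
  assumes "a - 1 \<noteq> 0" "c - a \<noteq> 0"
  shows "(a - c) / (a - 1) * ((1 - a) / (c - a)) = 1"
proof -
  have "(a - c) * (1 - a) = (a - 1) * (c - a)" by (simp add: algebra_simps)
  thus ?thesis using assms by (simp add: divide_simps)
qed

lemma ratio2:
  fixes a c :: complex
  assumes "c \<noteq> 0" "c - a \<noteq> 0"
  shows "(a - c) / c * (c / (c - a)) = -1"
proof -
  have "(a - c) * c = - (c * (c - a))" by (simp add: algebra_simps)
  thus ?thesis using assms by (simp add: divide_simps)
qed

lemma Sprop_stepA:
  assumes A: "\<forall>n::nat. n \<ge> 1 \<longrightarrow> A \<noteq> of_nat n" and C: "C \<notin> \<int>\<^sub>\<le>\<^sub>0"
    and re: "Re (C - A) > 1" and IH: "Sprop (A - 1) C"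
  shows "Sprop A C"
  unfolding Sprop_def
proof (intro allI impI, elim conjE)
  fix u :: complex assume u: "norm u = 1" "u \<noteq> -1"
  define w where "w = - u"
  have w: "norm w = 1" "w \<noteq> 0" using u by (auto simp: w_def)
  have u1: "1 + u \<noteq> 0" using u by (metis add_eq_0_iff)
  have A1: "A - 1 \<noteq> 0" using A by (metis of_nat_1 order_refl right_minus_eq)
  have nA: "1 - A \<notin> \<int>\<^sub>\<le>\<^sub>0" by (rule notposint_ne[OF A])
  have CA: "C - A \<notin> \<int>\<^sub>\<le>\<^sub>0" by (rule Re_pos_not_nonpos_Int) (use re in simp)
  have CA0: "C - A \<noteq> 0" using nonpos_Int_ne[OF CA, of 0] by simp
  have gCA: "Gamma (C - A) \<noteq> 0" using CA by (simp add: Gamma_eq_zero_iff)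
  define X where "X = infsum (\<lambda>n. TT A C n * w powi n) UNIV"
  have hf: "((\<lambda>n. TT A C n * w powi n) has_sum X) UNIV"
    unfolding X_def by (rule has_sum_infsum[OF TT_summable[OF A C re w(1)]])
  have hg: "((\<lambda>n. TT A C (n - 1) * w powi n) has_sum (w * X)) UNIV"
    by (rule has_sum_shift_int[OF w(2) hf])
  have hd: "((\<lambda>n. TT A C n * w powi n - TT A C (n - 1) * w powi n) has_sum (X - w * X)) UNIV"
    by (rule has_sum_diff'[OF hf hg])
  have IHu: "((\<lambda>n. TT (A - 1) C n * w powi n) has_sum (KK (A - 1) C * phi (A - 1) C u)) UNIV"
    using IH u unfolding Sprop_def w_def by blast
  have "((\<lambda>n. (A - C) / (A - 1) * (TT (A - 1) C n * w powi n)) has_sum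
          ((A - C) / (A - 1) * (KK (A - 1) C * phi (A - 1) C u))) UNIV"
    by (rule has_sum_cmult_right[OF IHu])
  moreover have "(A - C) / (A - 1) * (TT (A - 1) C n * w powi n) = TT A C n * w powi n - TT A C (n - 1) * w powi n" for n
    using TT_shiftA[OF A C, of n] by (simp add: algebra_simps)
  ultimately have hd2: "((\<lambda>n. TT A C n * w powi n - TT A C (n - 1) * w powi n) has_sum
          ((A - C) / (A - 1) * (KK (A - 1) C * phi (A - 1) C u))) UNIV" by simp
  have eqX: "X - w * X = (A - C) / (A - 1) * (KK (A - 1) C * phi (A - 1) C u)"
    using has_sum_unique[OF hd hd2] .
  have k1: "KK (A - 1) C = (1 - A) / (C - A) * KK A C"
  proof -
    have "1 - (A - 1) = (1 - A) + 1" by simp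
    hence e1: "Gamma (1 - (A - 1)) = (1 - A) * Gamma (1 - A)"
      using Gamma_plus1[OF nA] by metis
    have "C - (A - 1) = (C - A) + 1" by simp
    hence e2: "Gamma (C - (A - 1)) = (C - A) * Gamma (C - A)"
      using Gamma_plus1[OF CA] by metis
    show ?thesis unfolding KK_def e1 e2 using gCA CA0 by (simp add: field_simps)
  qed
  have p1: "phi (A - 1) C u = (1 + u) * phi A C u"
  proof -
    have "(1 + u) powr (- (A - 1)) = (1 + u) powr (1 + (- A))" by (simp add: algebra_simps)
    also have "\<dots> = (1 + u) * (1 + u) powr (- A)" by (simp only: powr_add powr_to_1)
    finally show ?thesis unfolding phi_def by simp
  qed
  have "(1 + u) * X = (1 + u) * (KK A C * phi A C u)"
  proof -
    have "(1 + u) * X = X - w * X" by (simp add: w_def algebra_simps)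
    also have "\<dots> = (A - C) / (A - 1) * ((1 - A) / (C - A) * KK A C * ((1 + u) * phi A C u))"
      unfolding eqX k1 p1 by simp
    also have "\<dots> = ((A - C) / (A - 1) * ((1 - A) / (C - A))) * ((1 + u) * (KK A C * phi A C u))"
      by (simp only: mult_ac)
    also have "\<dots> = (1 + u) * (KK A C * phi A C u)"
      unfolding ratio1[OF A1 CA0] by simp
    finally show ?thesis .
  qed
  hence "X = KK A C * phi A C u" using u1 by simp
  thus "((\<lambda>n. TT A C n * (- u) powi n) has_sum (KK A C * phi A C u)) UNIV"
    using hf unfolding w_def by simp
qed

lemma Sprop_stepC:
  assumes A: "\<forall>n::nat. n \<ge> 1 \<longrightarrow> A \<noteq> of_nat n" and C: "C \<notin> \<int>\<^sub>\<le>\<^sub>0"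
    and re: "Re (C - A) > 1" and IH: "Sprop A (C + 1)"
  shows "Sprop A C"
  unfolding Sprop_def
proof (intro allI impI, elim conjE)
  fix u :: complex assume u: "norm u = 1" "u \<noteq> -1"
  define w where "w = - u"
  have w: "norm w = 1" "w \<noteq> 0" using u by (auto simp: w_def)
  have u1: "1 + u \<noteq> 0" using u by (metis add_eq_0_iff)
  have C0: "C \<noteq> 0" using nonpos_Int_ne[OF C, of 0] by simp
  have CA: "C - A \<notin> \<int>\<^sub>\<le>\<^sub>0" by (rule Re_pos_not_nonpos_Int) (use re in simp)
  have CA0: "C - A \<noteq> 0" using nonpos_Int_ne[OF CA, of 0] by simp
  have gCA: "Gamma (C - A) \<noteq> 0" using CA by (simp add: Gamma_eq_zero_iff)
  have u0: "u \<noteq> 0" using u by auto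
  have ucnj: "u * cnj u = 1" using cnj_unit[OF u(1)] u0 by simp
  define X where "X = infsum (\<lambda>n. TT A C n * w powi n) UNIV"
  have hf: "((\<lambda>n. TT A C n * w powi n) has_sum X) UNIV"
    unfolding X_def by (rule has_sum_infsum[OF TT_summable[OF A C re w(1)]])
  have hg: "((\<lambda>n. TT A C (n - 1) * w powi n) has_sum (w * X)) UNIV"
    by (rule has_sum_shift_int[OF w(2) hf])
  have hd: "((\<lambda>n. TT A C n * w powi n - TT A C (n - 1) * w powi n) has_sum (X - w * X)) UNIV"
    by (rule has_sum_diff'[OF hf hg])
  have IHu: "((\<lambda>n. TT A (C + 1) n * w powi n) has_sum (KK A (C + 1) * phi A (C + 1) u)) UNIV"
    using IH u unfolding Sprop_def w_def by blast
  have "((\<lambda>n. TT A (C + 1) (n - 1) * w powi n) has_sum (w * (KK A (C + 1) * phi A (C + 1) u))) UNIV"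
    by (rule has_sum_shift_int[OF w(2) IHu])
  hence "((\<lambda>n. (A - C) / C * (TT A (C + 1) (n - 1) * w powi n)) has_sum
          ((A - C) / C * (w * (KK A (C + 1) * phi A (C + 1) u)))) UNIV"
    by (rule has_sum_cmult_right)
  moreover have "(A - C) / C * (TT A (C + 1) (n - 1) * w powi n) = TT A C n * w powi n - TT A C (n - 1) * w powi n" for n
    using TT_shiftC[OF A C, of n] by (simp add: algebra_simps)
  ultimately have hd2: "((\<lambda>n. TT A C n * w powi n - TT A C (n - 1) * w powi n) has_sum
          ((A - C) / C * (w * (KK A (C + 1) * phi A (C + 1) u)))) UNIV" by simp
  have eqX: "X - w * X = (A - C) / C * (w * (KK A (C + 1) * phi A (C + 1) u))"
    using has_sum_unique[OF hd hd2] .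
  have k1: "KK A (C + 1) = C / (C - A) * KK A C"
  proof -
    have "Gamma (C + 1) = C * Gamma C" using Gamma_plus1[OF C] .
    moreover have "C + 1 - A = (C - A) + 1" by simp
    hence "Gamma (C + 1 - A) = (C - A) * Gamma (C - A)"
      using Gamma_plus1[OF CA] by metis
    ultimately show ?thesis unfolding KK_def using gCA CA0 by (simp add: field_simps)
  qed
  have p1: "phi A (C + 1) u = (1 + cnj u) * phi A C u"
  proof -
    have "(1 + cnj u) powr (C + 1 - 1) = (1 + cnj u) powr (1 + (C - 1))" by (simp add: algebra_simps)
    also have "\<dots> = (1 + cnj u) * (1 + cnj u) powr (C - 1)" by (simp only: powr_add powr_to_1)
    finally show ?thesis unfolding phi_def by (simp add: mult_ac)
  qed
  have "(1 + u) * X = (1 + u) * (KK A C * phi A C u)"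
  proof -
    have "(1 + u) * X = X - w * X" by (simp add: w_def algebra_simps)
    also have "\<dots> = (A - C) / C * (- u * (C / (C - A) * KK A C * ((1 + cnj u) * phi A C u)))"
      unfolding eqX k1 p1 unfolding w_def by simp
    also have "\<dots> = ((A - C) / C * (C / (C - A))) * (- u * ((1 + cnj u) * (KK A C * phi A C u)))"
      by (simp only: mult_ac)
    also have "\<dots> = (u + u * cnj u) * (KK A C * phi A C u)"
      unfolding ratio2[OF C0 CA0] by (simp add: algebra_simps)
    also have "\<dots> = (1 + u) * (KK A C * phi A C u)" unfolding ucnj by (simp add: add.commute)
    finally show ?thesis .
  qed
  hence "X = KK A C * phi A C u" using u1 by simp
  thus "((\<lambda>n. TT A C n * (- u) powi n) has_sum (KK A C * phi A C u)) UNIV"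
    using hf unfolding w_def by simp
qed

lemma Sprop_negA:
  assumes reA: "Re A < 0"
  shows "\<forall>C. C \<notin> \<int>\<^sub>\<le>\<^sub>0 \<longrightarrow> Re (C - A) > 1 \<longrightarrow> Re C + real l > 1 \<longrightarrow> Sprop A C"
proof (induction l)
  case 0
  show ?case using Sprop_base[OF reA] by simp
next
  case (Suc l)
  show ?case
  proof (intro allI impI)
    fix C assume C: "C \<notin> \<int>\<^sub>\<le>\<^sub>0" and re: "Re (C - A) > 1" and rl: "Re C + real (Suc l) > 1"
    have A: "\<forall>n::nat. n \<ge> 1 \<longrightarrow> A \<noteq> of_nat n" using reA by auto
    have C1: "C + 1 \<notin> \<int>\<^sub>\<le>\<^sub>0" using nonpos_Ints_add_nat[OF C, of 1] by simp
    have "Sprop A (C + 1)" using Suc.IH C1 re rl by simp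
    thus "Sprop A C" by (rule Sprop_stepC[OF A C re])
  qed
qed

lemma Sprop_all:
  assumes C: "C \<notin> \<int>\<^sub>\<le>\<^sub>0"
  shows "\<forall>A. (\<forall>n::nat. n \<ge> 1 \<longrightarrow> A \<noteq> of_nat n) \<longrightarrow> Re (C - A) > 1 \<longrightarrow> Re A < real k \<longrightarrow> Sprop A C"
proof (induction k)
  case 0
  show ?case
  proof (intro allI impI)
    fix A assume A: "\<forall>n::nat. n \<ge> 1 \<longrightarrow> A \<noteq> of_nat n" and re: "Re (C - A) > 1" and r0: "Re A < real 0"
    define l where "l = nat (ceiling (1 - Re C)) + 1"
    have "Re C + real l > 1" unfolding l_def by linarith
    thus "Sprop A C" using Sprop_negA[of A l] r0 C re by simp
  qed
next
  case (Suc k)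
  show ?case
  proof (intro allI impI)
    fix A assume A: "\<forall>n::nat. n \<ge> 1 \<longrightarrow> A \<noteq> of_nat n" and re: "Re (C - A) > 1" and rk: "Re A < real (Suc k)"
    have "Sprop (A - 1) C" using Suc.IH notposint_minus1[OF A] re rk by simp
    thus "Sprop A C" by (rule Sprop_stepA[OF A C re])
  qed
qed

theorem bilateral_1H1:
  assumes A: "\<forall>n::nat. n \<ge> 1 \<longrightarrow> A \<noteq> of_nat n" and C: "C \<notin> \<int>\<^sub>\<le>\<^sub>0"
    and re: "Re (C - A) > 1" and u: "norm u = 1" "u \<noteq> -1"
  shows "((\<lambda>n. TT A C n * (- u) powi n) has_sum (KK A C * phi A C u)) UNIV"
proof -
  define k where "k = nat (ceiling (Re A)) + 1"
  have "Re A < real k" unfolding k_def by linarith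
  hence "Sprop A C" using Sprop_all[OF C, of k] A re by blast
  thus ?thesis using u unfolding Sprop_def by blast
qed

lemma expo_alg:
  fixes A C L P :: complex
  shows "(C - A - 1) * L + \<i> * (C - A - 1) * P / 2 - \<i> * (C - 1) * P
       = - A * (L + \<i> * (P / 2)) + (C - 1) * (L - \<i> * (P / 2))"
  by (simp add: field_simps)

lemma phi_eq:
  fixes u A C :: complex
  assumes u: "norm u = 1" "u \<noteq> -1"
  shows "onep_pow u (C - A - 1) / circ_pow u (C - 1) = phi A C u"
proof -
  define \<psi> where "\<psi> = Arg u"
  have u0: "u \<noteq> 0" using u by auto
  have b1: "- pi < \<psi>" "\<psi> \<le> pi" using Arg_bounded[of u] by (auto simp: \<psi>_def)
  have b2: "\<psi> \<noteq> pi"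
  proof
    assume "\<psi> = pi"
    hence r: "Re u < 0" "Im u = 0" using Arg_eq_pi[of u] by (auto simp: \<psi>_def)
    have "(Re u)^2 = 1" using u(1) cmod_power2[of u] r by simp
    hence "Re u = -1" using r by (metis abs_of_neg abs_power2 power2_eq_1_iff neg_equal_iff_equal)
    hence "u = -1" using r complex_eq_iff by auto
    thus False using u by simp
  qed
  have uexp: "u = exp (\<i> * of_real \<psi>)"
  proof -
    have "sgn u = u" using u by (simp add: sgn_eq)
    thus ?thesis using cis_Arg[OF u0] by (simp add: \<psi>_def cis_conv_exp)
  qed
  define x where "x = 2 * cos (\<psi> / 2)"
  have x0: "x > 0" unfolding x_def using b1 b2 by (intro mult_pos_pos cos_gt_zero_pi) auto
  define L where "L = ln x"
  have xL: "complex_of_real x = exp (of_real L)" using x0 by (simp add: L_def exp_of_real)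
  have h1: "1 + u = exp (of_real L + \<i> * of_real (\<psi> / 2))"
  proof -
    have "1 + u = of_real x * cis (\<psi> / 2)"
    proof (rule complex_eqI)
      have c: "cos \<psi> = 2 * cos (\<psi>/2) ^ 2 - 1" using cos_double_cos[of "\<psi>/2"] by simp
      have s: "sin \<psi> = 2 * sin (\<psi>/2) * cos (\<psi>/2)" using sin_double[of "\<psi>/2"] by simp
      show "Re (1 + u) = Re (of_real x * cis (\<psi> / 2))"
        unfolding uexp x_def using c by (simp add: Re_exp power2_eq_square)
      show "Im (1 + u) = Im (of_real x * cis (\<psi> / 2))"
        unfolding uexp x_def using s by (simp add: Im_exp)
    qed
    thus ?thesis unfolding xL cis_conv_exp by (simp add: exp_add)
  qed
  have h2: "1 + cnj u = exp (of_real L - \<i> * of_real (\<psi> / 2))"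
  proof -
    have "1 + cnj u = cnj (1 + u)" by simp
    also have "\<dots> = exp (cnj (of_real L + \<i> * of_real (\<psi> / 2)))" unfolding h1 exp_cnj ..
    finally show ?thesis by simp
  qed
  have im1: "- pi < Im (of_real L + \<i> * of_real (\<psi> / 2))" "Im (of_real L + \<i> * of_real (\<psi> / 2)) \<le> pi"
    using b1 by auto
  have im2: "- pi < Im (of_real L - \<i> * of_real (\<psi> / 2))" "Im (of_real L - \<i> * of_real (\<psi> / 2)) \<le> pi"
    using b1 b2 by auto
  have l1: "ln (1 + u) = of_real L + \<i> * of_real (\<psi> / 2)" unfolding h1 using im1 by (rule Ln_exp)
  have l2: "ln (1 + cnj u) = of_real L - \<i> * of_real (\<psi> / 2)" unfolding h2 using im2 by (rule Ln_exp)
  have nz1: "1 + u \<noteq> 0" unfolding h1 by simp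
  have nz2: "1 + cnj u \<noteq> 0" unfolding h2 by simp
  have phi: "phi A C u = exp (- A * (of_real L + \<i> * of_real (\<psi> / 2)) + (C - 1) * (of_real L - \<i> * of_real (\<psi> / 2)))"
  proof -
    have "phi A C u = exp (- A * (of_real L + \<i> * of_real (\<psi> / 2))) * exp ((C - 1) * (of_real L - \<i> * of_real (\<psi> / 2)))"
      unfolding phi_def powr_def using nz1 nz2 by (simp add: l1 l2)
    also have "\<dots> = exp (- A * (of_real L + \<i> * of_real (\<psi> / 2)) + (C - 1) * (of_real L - \<i> * of_real (\<psi> / 2)))"
      by (rule exp_add[symmetric])
    finally show ?thesis .
  qed
  have op: "onep_pow u (C - A - 1) = exp ((C - A - 1) * of_real L) * exp (\<i> * (C - A - 1) * of_real \<psi> / 2)"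
    unfolding onep_pow_def x_def[symmetric] \<psi>_def[symmetric] powr_def using x0 by (simp add: Ln_of_real L_def)
  have cp: "circ_pow u (C - 1) = exp (\<i> * (C - 1) * of_real \<psi>)"
    unfolding circ_pow_def \<psi>_def ..
  have "onep_pow u (C - A - 1) / circ_pow u (C - 1)
      = exp ((C - A - 1) * of_real L + \<i> * (C - A - 1) * of_real \<psi> / 2 - \<i> * (C - 1) * of_real \<psi>)"
    unfolding op cp by (simp add: exp_add exp_diff)
  also have "\<dots> = phi A C u"
    unfolding phi expo_alg[of C A "of_real L" "of_real \<psi>"] by simp
  finally show ?thesis .
qed

definition QQ :: "int \<Rightarrow> complex" where
  "QQ m = (if 0 \<le> m then inverse (of_nat (2 ^ (2 * nat m))) else of_nat (2 ^ (2 * nat (- m))))"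

lemma QQ_nz: "QQ m \<noteq> 0"
  by (simp add: QQ_def)

lemma poch_int_double:
  fixes a :: complex
  shows "poch_int a m * poch_int (a + 1/2) m = poch_int (2 * a) (2 * m) * QQ m"
proof (cases "0 \<le> m")
  case True
  define k where "k = nat m"
  have m: "m = int k" using True by (simp add: k_def)
  have d: "pochhammer (2 * a) (2 * k) = of_nat (2 ^ (2 * k)) * pochhammer a k * pochhammer (a + 1/2) k"
    by (rule pochhammer_double)
  have n2: "nat (2 * int k) = 2 * k" by simp
  have "poch_int a m * poch_int (a + 1/2) m = pochhammer a k * pochhammer (a + 1/2) k"
    by (simp add: poch_int_def m)
  also have "\<dots> = pochhammer (2 * a) (2 * k) * inverse (of_nat (2 ^ (2 * k)))"
    unfolding d by (simp add: field_simps)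
  also have "\<dots> = poch_int (2 * a) (2 * m) * QQ m"
    by (simp add: poch_int_def QQ_def m n2 del: of_nat_power)
  finally show ?thesis .
next
  case False
  define k where "k = nat (- m)"
  have m: "m = - int k" using False by (simp add: k_def)
  have d: "pochhammer (2 * (a - of_nat k)) (2 * k) = of_nat (2 ^ (2 * k)) * pochhammer (a - of_nat k) k * pochhammer (a - of_nat k + 1/2) k"
    by (rule pochhammer_double)
  have e1: "poch_int a m = 1 / pochhammer (a - of_nat k) k"
    using False by (simp add: poch_int_def m)
  have e2: "poch_int (a + 1/2) m = 1 / pochhammer (a - of_nat k + 1/2) k"
    using False by (simp add: poch_int_def m algebra_simps)
  have e3: "poch_int (2 * a) (2 * m) = 1 / pochhammer (2 * (a - of_nat k)) (2 * k)"
  proof -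
    have "\<not> 0 \<le> 2 * m" using False by simp
    moreover have "nat (- (2 * m)) = 2 * k" by (simp add: m)
    moreover have "2 * a - of_int (- (2 * m)) = 2 * (a - of_nat k)" by (simp add: m algebra_simps)
    ultimately show ?thesis by (simp add: poch_int_def)
  qed
  have q: "QQ m = of_nat (2 ^ (2 * k))" using False by (simp add: QQ_def k_def del: of_nat_power)
  show ?thesis unfolding e1 e2 e3 q d by (simp add: field_simps)
qed

lemma H22_term_eq:
  fixes a c w :: complex
  shows "H22_term a (a + 1/2) c (c + 1/2) (w ^ 2) m = TT (2 * a) (2 * c) (2 * m) * w powi (2 * m)"
proof -
  have z: "(w ^ 2) powi m = w powi (2 * m)" using power_int_power[of w 2 m] by simp
  have "H22_term a (a + 1/2) c (c + 1/2) (w ^ 2) m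
      = (poch_int (2 * a) (2 * m) * QQ m) / (poch_int (2 * c) (2 * m) * QQ m) * w powi (2 * m)"
    unfolding H22_term_def poch_int_double z ..
  also have "\<dots> = TT (2 * a) (2 * c) (2 * m) * w powi (2 * m)"
    using QQ_nz[of m] by (simp add: TT_def)
  finally show ?thesis .
qed


lemma has_sum_even:
  fixes f :: "int \<Rightarrow> complex"
  assumes h: "(f has_sum S) UNIV" and odd0: "\<And>n. odd n \<Longrightarrow> f n = 0"
  shows "((\<lambda>m. f (2 * m)) has_sum S) UNIV"
proof -
  have inj: "inj (\<lambda>m::int. 2 * m)" by (auto simp: inj_def)
  have "(f has_sum S) (range (\<lambda>m::int. 2 * m))"
  proof (subst has_sum_cong_neutral[where T = UNIV and g = f])
    fix x assume "x \<in> UNIV - range (\<lambda>m::int. 2 * m)"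
    hence "odd x" by (auto elim!: evenE)
    thus "f x = 0" by (rule odd0)
  qed (use h in auto)
  thus ?thesis by (subst (asm) has_sum_reindex[OF inj]) (simp add: o_def)
qed

theorem mainTheorem1:
  fixes a c w z :: complex
  assumes h2c: "\<forall>n::nat. 2 * c \<noteq> - of_nat n"
    and h2a: "\<forall>n::nat. n \<ge> 1 \<longrightarrow> 2 * a \<noteq> of_nat n"
    and hre: "Re (c - a) > 1 / 2"
    and hw: "norm w = 1" "w \<noteq> 1" "w \<noteq> -1"
    and hz: "z = w ^ 2"
  shows "(H22_term a (a + 1/2) c (c + 1/2) z has_sum H22_rhs a c w) (UNIV :: int set)
         \<and> H22_rhs a c w = H22_rhs a c (- w)"
proof
  define A where "A = 2 * a"
  define C where "C = 2 * c"
  have Aok: "\<forall>n::nat. n \<ge> 1 \<longrightarrow> A \<noteq> of_nat n" using h2a by (simp add: A_def)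
  have Cok: "C \<notin> \<int>\<^sub>\<le>\<^sub>0"
  proof
    assume "C \<in> \<int>\<^sub>\<le>\<^sub>0"
    then obtain k where "C = - of_nat k" by (elim nonpos_Ints_cases')
    thus False using h2c by (simp add: C_def)
  qed
  have re: "Re (C - A) > 1" using hre by (simp add: A_def C_def)
  have mw: "norm (- w) = 1" "- w \<noteq> -1" using hw by auto
  have F1: "((\<lambda>n. TT A C n * w powi n) has_sum (KK A C * phi A C (- w))) UNIV"
    using bilateral_1H1[OF Aok Cok re mw] by simp
  have F2: "((\<lambda>n. TT A C n * (- w) powi n) has_sum (KK A C * phi A C w)) UNIV"
    using bilateral_1H1[OF Aok Cok re hw(1) hw(3)] .
  have F: "((\<lambda>n. TT A C n * w powi n + TT A C n * (- w) powi n) has_sum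
            (KK A C * phi A C (- w) + KK A C * phi A C w)) UNIV"
    by (rule has_sum_add[OF F1 F2])
  have E: "((\<lambda>m. TT A C (2 * m) * w powi (2 * m) + TT A C (2 * m) * (- w) powi (2 * m)) has_sum
            (KK A C * phi A C (- w) + KK A C * phi A C w)) UNIV"
  proof (rule has_sum_even[OF F])
    fix n :: int assume "odd n"
    thus "TT A C n * w powi n + TT A C n * (- w) powi n = 0" by simp
  qed
  have t: "TT A C (2 * m) * w powi (2 * m) + TT A C (2 * m) * (- w) powi (2 * m)
         = 2 * H22_term a (a + 1/2) c (c + 1/2) z m" for m
    unfolding hz H22_term_eq A_def C_def by simp
  have "((\<lambda>m. 2 * H22_term a (a + 1/2) c (c + 1/2) z m) has_sum
            (KK A C * phi A C (- w) + KK A C * phi A C w)) UNIV"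
    using E unfolding t .
  hence H: "(H22_term a (a + 1/2) c (c + 1/2) z has_sum
            ((KK A C * phi A C (- w) + KK A C * phi A C w) / 2)) UNIV"
    by (subst (asm) has_sum_cmult_right_iff) auto
  have r1: "onep_pow w (2 * c - 2 * a - 1) / circ_pow w (2 * c - 1) = phi A C w"
    using phi_eq[OF hw(1) hw(3), of C A] by (simp add: A_def C_def)
  have r2: "onep_pow (- w) (2 * c - 2 * a - 1) / circ_pow (- w) (2 * c - 1) = phi A C (- w)"
    using phi_eq[OF mw, of C A] by (simp add: A_def C_def)
  have k: "Gamma (2 * c) * Gamma (1 - 2 * a) / (2 * Gamma (2 * c - 2 * a)) = KK A C / 2"
    by (simp add: KK_def A_def C_def)
  have "H22_rhs a c w = (KK A C * phi A C (- w) + KK A C * phi A C w) / 2"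
    unfolding H22_rhs_def r1 r2 k by (simp add: algebra_simps)
  thus "(H22_term a (a + 1/2) c (c + 1/2) z has_sum H22_rhs a c w) UNIV" using H by (simp only:)
next
  show "H22_rhs a c w = H22_rhs a c (- w)"
    by (simp add: H22_rhs_def add.commute)
qed

end
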